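(* Let $>$ be a $\mathcal B$-compatible reduction order. Every fair and non-failing run $(\mathcal E,\varnothing)\vdash^*_{\mathcal I_B}(\varnothing,\mathcal R)$ for an ES $\mathcal E$ in $\mathcal I_B$ produces a $\mathcal B$-complete presentation of $\mathcal E$: $\leftrightarrow^*_{\mathcal E\cup\mathcal B}=\leftrightarrow^*_{\mathcal R\cup\mathcal B}$, $\mathcal R$ is terminating modulo $\mathcal B$ and Church–Rosser modulo $\mathcal B$.
   Context: Terms over a signature $\mathcal F$ and variables. For a set $\mathcal E$ of pairs of terms (equations and rules read as oriented pairs), $s\to_{\mathcal E}t$ iff $s|_p=\ell\sigma$, $t=s[r\sigma]_p$ for some $(\ell,r)\in\mathcal E$, position $p$, substitution $\sigma$; $\leftarrow$ is the inverse, $\leftrightarrow$ the symmetric closure. $\mathcal B$ is a fixed ES with $\mathrm{Var}(\ell)=\mathrm{Var}(r)$ for all $\ell\approx r\in\mathcal B$; $\sim_{\mathcal B}=\leftrightarrow^*_{\mathcal B}$, $\mathcal B^\pm=\mathcal B\cup\{t\approx s\mid s\approx t\in\mathcal B\}$; $\to_{\mathcal R/\mathcal B}=\sim_{\mathcal B}\cdot\to_{\mathcal R}\cdot\sim_{\mathcal B}$; $s\downarrow^\sim_{\mathcal R}t$ iff $s\to^*_{\mathcal R}\cdot\sim_{\mathcal B}\cdot\leftarrow^*_{\mathcal R}t$. Terminating modulo $\mathcal B$: no infinite $\to_{\mathcal R/\mathcal B}$-sequence; Church–Rosser modulo $\mathcal B$: $\leftrightarrow^*_{\mathcal R\cup\mathcal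 B}\subseteq\downarrow^\sim_{\mathcal R}$. A $\mathcal B$-compatible reduction order is a well-founded order on terms closed under contexts and substitutions with $\sim_{\mathcal B}\cdot>\cdot\sim_{\mathcal B}\subseteq>$. The inference system $\mathcal I_B$ (parameterized by $>$) on pairs $(\mathcal E,\mathcal R)$ ($\uplus$ disjoint union, $s\approx^\pm t$ means $s\approx t$ or $t\approx s$): Deduce: $(\mathcal E,\mathcal R)\vdash(\mathcal E\cup\{s\approx t\},\mathcal R)$ if $s\leftarrow_{\mathcal R}\cdot\to_{\mathcal R\cup\mathcal B^\pm}t$. Orient: $(\mathcal E\uplus\{s\approx^\pm t\},\mathcal R)\vdash(\mathcal E,\mathcal R\cup\{s\to t\})$ if $s>t$. Delete: $(\mathcal E\uplus\{s\approx t\},\mathcal R)\vdash(\mathcal E,\mathcal R)$ if $s\sim_{\mathcal B}t$. Simplify: $(\mathcal E\uplus\{s\approx^\pm t\},\mathcal R)\vdash(\mathcal E\cup\{u\approx t\},\mathcal R)$ if $s\to_{\mathcal R}u$. Collapse: $(\mathcal E,\mathcal R\uplus\{s\to t\})\vdash(\mathcal E\cup\{u\approx t\},\mathcal R)$ if $s\to_{\mathcal R}u$. Compose: $(\mathcal E,\mathcal R\uplus\{s\to t\})\vdash(\mathcal E,\mathcal R\cup\{s\to u\})$ if $t\to_{\mathcal R}u$. A run for $\mathcal E$ goes from $(\mathcal E_0,\mathcal R_0)=(\mathcal E,\varnothing)$ to $(\mathcal E_n,\mathcal R_n)$; it fails if $\mathcal E_n\ne\varnothing$, and is fair if $\mathcal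 R_n$ is left-linear and $\mathrm{PCP}(\mathcal R_n)\cup\mathrm{PCP}^\pm(\mathcal R_n,\mathcal B^\pm)\subseteq\ \downarrow^\sim_{\mathcal R_n}\cup\bigcup_{i=0}^n\leftrightarrow_{\mathcal E_i}$. Critical pairs: for sets of oriented pairs $\mathcal R_1,\mathcal R_2$ (equations of $\mathcal B^\pm$ read as oriented pairs), an overlap is $\langle\ell_1\to r_1,p,\ell_2\to r_2\rangle$ with $\ell_i\to r_i$ variants of elements of $\mathcal R_i$ without common variables, $p$ a non-variable position of $\ell_2$, $\ell_1$ and $\ell_2|_p$ unifiable, and the two rules not variants if $p=\epsilon$; with an mgu $\sigma$ it yields the critical pair $\ell_2\sigma[r_1\sigma]_p\approx r_2\sigma$, which is prime if all proper subterms of $\ell_2\sigma|_p$ are normal forms w.r.t. the TRS $\mathcal R$ under consideration. $\mathrm{PCP}(\mathcal R)$: prime critical pairs from overlaps of $\mathcal R$ with itself; $\mathrm{PCP}^\pm(\mathcal R,\mathcal B^\pm)$: prime critical pairs from overlaps between $\mathcal R$ and $\mathcal B^\pm$ in either order. *)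

theory Defs
  imports Main
begin

datatype (funs_term: 'f, vars_term: 'v) "term" = Var 'v | Fun 'f "('f, 'v) term list"

type_synonym ('f, 'v) trs = "(('f, 'v) term \<times> ('f, 'v) term) set"
type_synonym ('f, 'v) subst = "'v \<Rightarrow> ('f, 'v) term"
type_synonym pos = "nat list"

fun subst_apply_term :: "('f, 'v) term \<Rightarrow> ('f, 'v) subst \<Rightarrow> ('f, 'v) term" (infixl "\<cdot>" 67) where
  "Var x \<cdot> \<sigma> = \<sigma> x"
| "Fun f ts \<cdot> \<sigma> = Fun f (map (\<lambda>t. t \<cdot> \<sigma>) ts)"

inductive is_pos :: "('f, 'v) term \<Rightarrow> pos \<Rightarrow> bool" where
  root: "is_pos t []"
| arg: "i < length ts \<Longrightarrow> is_pos (ts ! i) p \<Longrightarrow> is_pos (Fun f ts) (i # p)"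

definition poss :: "('f, 'v) term \<Rightarrow> pos set" where
  "poss t = {p. is_pos t p}"

fun subt_at :: "('f, 'v) term \<Rightarrow> pos \<Rightarrow> ('f, 'v) term" where
  "subt_at t [] = t"
| "subt_at (Fun f ts) (i # p) = subt_at (ts ! i) p"
| "subt_at (Var x) (i # p) = Var x"

fun replace_at :: "('f, 'v) term \<Rightarrow> pos \<Rightarrow> ('f, 'v) term \<Rightarrow> ('f, 'v) term" where
  "replace_at t [] s = s"
| "replace_at (Fun f ts) (i # p) s = Fun f (ts[i := replace_at (ts ! i) p s])"
| "replace_at (Var x) (i # p) s = Var x"

definition is_Var_term :: "('f, 'v) term \<Rightarrow> bool" where
  "is_Var_term t = (\<exists>x. t = Var x)"

definition fun_poss :: "('f, 'v) term \<Rightarrow> pos set" where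
  "fun_poss t = {p \<in> poss t. \<not> is_Var_term (subt_at t p)}"

datatype ('f, 'v) ctxt = Hole | More 'f "('f, 'v) term list" "('f, 'v) ctxt" "('f, 'v) term list"

fun ctxt_apply :: "('f, 'v) ctxt \<Rightarrow> ('f, 'v) term \<Rightarrow> ('f, 'v) term" where
  "ctxt_apply Hole s = s"
| "ctxt_apply (More f ss1 C ss2) s = Fun f (ss1 @ ctxt_apply C s # ss2)"

definition rstep :: "('f, 'v) trs \<Rightarrow> ('f, 'v) trs" where
  "rstep R = {(s, t). \<exists>l r p \<sigma>. (l, r) \<in> R \<and> p \<in> poss s \<and> subt_at s p = l \<cdot> \<sigma>
                        \<and> t = replace_at s p (r \<cdot> \<sigma>)}"

definition sym_step :: "('f, 'v) trs \<Rightarrow> ('f, 'v) trs" where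
  "sym_step E = rstep E \<union> (rstep E)\<inverse>"

definition conv :: "('f, 'v) trs \<Rightarrow> ('f, 'v) trs" where
  "conv E = (sym_step E)\<^sup>*"

definition Bpm :: "('f, 'v) trs \<Rightarrow> ('f, 'v) trs" where
  "Bpm B = B \<union> B\<inverse>"

definition simB :: "('f, 'v) trs \<Rightarrow> ('f, 'v) trs" where
  "simB B = conv B"

definition relstep :: "('f, 'v) trs \<Rightarrow> ('f, 'v) trs \<Rightarrow> ('f, 'v) trs" where
  "relstep B R = simB B O rstep R O simB B"

definition join_mod :: "('f, 'v) trs \<Rightarrow> ('f, 'v) trs \<Rightarrow> ('f, 'v) trs" where
  "join_mod B R = (rstep R)\<^sup>* O simB B O ((rstep R)\<inverse>)\<^sup>*"

definition SN_mod :: "('f, 'v) trs \<Rightarrow> ('f, 'v) trs \<Rightarrow> bool" where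
  "SN_mod B R = (\<not> (\<exists>f :: nat \<Rightarrow> ('f, 'v) term. \<forall>i. (f i, f (Suc i)) \<in> relstep B R))"

definition CR_mod :: "('f, 'v) trs \<Rightarrow> ('f, 'v) trs \<Rightarrow> bool" where
  "CR_mod B R = (conv (R \<union> B) \<subseteq> join_mod B R)"

section \<open>B-compatible reduction orders (gt contains (s,t) iff s > t)\<close>

definition B_compatible_reduction_order :: "('f, 'v) trs \<Rightarrow> ('f, 'v) trs \<Rightarrow> bool" where
  "B_compatible_reduction_order B gt =
     (irrefl gt \<and> trans gt \<and> wf (gt\<inverse>)
      \<and> (\<forall>C s t. (s, t) \<in> gt \<longrightarrow> (ctxt_apply C s, ctxt_apply C t) \<in> gt)
      \<and> (\<forall>\<sigma> s t. (s, t) \<in> gt \<longrightarrow> (s \<cdot> \<sigma>, t \<cdot> \<sigma>) \<in> gt)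
      \<and> simB B O gt O simB B \<subseteq> gt)"

fun linear_term :: "('f, 'v) term \<Rightarrow> bool" where
  "linear_term (Var x) = True"
| "linear_term (Fun f ts) = ((\<forall>t \<in> set ts. linear_term t) \<and>
     (\<forall>i j. i < j \<and> j < length ts \<longrightarrow> vars_term (ts ! i) \<inter> vars_term (ts ! j) = {}))"

definition left_linear :: "('f, 'v) trs \<Rightarrow> bool" where
  "left_linear R = (\<forall>(l, r) \<in> R. linear_term l)"

definition is_mgu :: "('f, 'v) subst \<Rightarrow> ('f, 'v) term \<Rightarrow> ('f, 'v) term \<Rightarrow> bool" where
  "is_mgu \<sigma> s t = (s \<cdot> \<sigma> = t \<cdot> \<sigma> \<and>
     (\<forall>\<tau>. s \<cdot> \<tau> = t \<cdot> \<tau> \<longrightarrow> (\<exists>\<delta>. \<forall>x. \<tau> x = \<sigma> x \<cdot> \<delta>)))"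

definition is_variant :: "('f, 'v) term \<times> ('f, 'v) term \<Rightarrow> ('f, 'v) term \<times> ('f, 'v) term \<Rightarrow> bool" where
  "is_variant lr lr' = (\<exists>\<pi>. bij \<pi> \<and> fst lr' = fst lr \<cdot> (Var \<circ> \<pi>) \<and> snd lr' = snd lr \<cdot> (Var \<circ> \<pi>))"

definition variant_of :: "('f, 'v) term \<times> ('f, 'v) term \<Rightarrow> ('f, 'v) trs \<Rightarrow> bool" where
  "variant_of lr R = (\<exists>lr0 \<in> R. is_variant lr0 lr)"

definition vars_rule :: "('f, 'v) term \<times> ('f, 'v) term \<Rightarrow> 'v set" where
  "vars_rule lr = vars_term (fst lr) \<union> vars_term (snd lr)"

definition NF :: "('f, 'v) trs \<Rightarrow> ('f, 'v) term \<Rightarrow> bool" where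
  "NF R t = (\<nexists>u. (t, u) \<in> rstep R)"

definition prime_redex :: "('f, 'v) trs \<Rightarrow> ('f, 'v) term \<Rightarrow> bool" where
  "prime_redex R u = (\<forall>q \<in> poss u. q \<noteq> [] \<longrightarrow> NF R (subt_at u q))"

definition pcp :: "('f, 'v) trs \<Rightarrow> ('f, 'v) trs \<Rightarrow> ('f, 'v) trs \<Rightarrow> ('f, 'v) trs" where
  "pcp R1 R2 S = {(replace_at (l2 \<cdot> \<sigma>) p (r1 \<cdot> \<sigma>), r2 \<cdot> \<sigma>) | l1 r1 p l2 r2 \<sigma>.
      variant_of (l1, r1) R1 \<and> variant_of (l2, r2) R2 \<and>
      vars_rule (l1, r1) \<inter> vars_rule (l2, r2) = {} \<and>
      p \<in> fun_poss l2 \<and>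
      (p = [] \<longrightarrow> \<not> is_variant (l1, r1) (l2, r2)) \<and>
      is_mgu \<sigma> l1 (subt_at l2 p) \<and>
      prime_redex S (subt_at (l2 \<cdot> \<sigma>) p)}"

definition PCP :: "('f, 'v) trs \<Rightarrow> ('f, 'v) trs" where
  "PCP R = pcp R R R"

definition PCP_pm :: "('f, 'v) trs \<Rightarrow> ('f, 'v) trs \<Rightarrow> ('f, 'v) trs" where
  "PCP_pm R BB = pcp R BB R \<union> pcp BB R R"

inductive IB_step :: "('f, 'v) trs \<Rightarrow> ('f, 'v) trs \<Rightarrow> ('f, 'v) trs \<times> ('f, 'v) trs
    \<Rightarrow> ('f, 'v) trs \<times> ('f, 'v) trs \<Rightarrow> bool" for gt B where
  deduce: "(u, s) \<in> rstep R \<Longrightarrow> (u, t) \<in> rstep (R \<union> Bpm B) \<Longrightarrow>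
      IB_step gt B (E, R) (E \<union> {(s, t)}, R)"
| orient_l: "(s, t) \<in> E \<Longrightarrow> (s, t) \<in> gt \<Longrightarrow>
      IB_step gt B (E, R) (E - {(s, t)}, R \<union> {(s, t)})"
| orient_r: "(t, s) \<in> E \<Longrightarrow> (s, t) \<in> gt \<Longrightarrow>
      IB_step gt B (E, R) (E - {(t, s)}, R \<union> {(s, t)})"
| delete: "(s, t) \<in> E \<Longrightarrow> (s, t) \<in> simB B \<Longrightarrow>
      IB_step gt B (E, R) (E - {(s, t)}, R)"
| simplify_l: "(s, t) \<in> E \<Longrightarrow> (s, u) \<in> rstep R \<Longrightarrow>
      IB_step gt B (E, R) ((E - {(s, t)}) \<union> {(u, t)}, R)"
| simplify_r: "(t, s) \<in> E \<Longrightarrow> (s, u) \<in> rstep R \<Longrightarrow>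
      IB_step gt B (E, R) ((E - {(t, s)}) \<union> {(u, t)}, R)"
| collapse: "(s, t) \<in> R \<Longrightarrow> (s, u) \<in> rstep (R - {(s, t)}) \<Longrightarrow>
      IB_step gt B (E, R) (E \<union> {(u, t)}, R - {(s, t)})"
| compose: "(s, t) \<in> R \<Longrightarrow> (t, u) \<in> rstep (R - {(s, t)}) \<Longrightarrow>
      IB_step gt B (E, R) (E, (R - {(s, t)}) \<union> {(s, u)})"

definition IB_run :: "('f, 'v) trs \<Rightarrow> ('f, 'v) trs \<Rightarrow> ('f, 'v) trs
    \<Rightarrow> (nat \<Rightarrow> ('f, 'v) trs \<times> ('f, 'v) trs) \<Rightarrow> nat \<Rightarrow> bool" where
  "IB_run gt B E run n = (run 0 = (E, {}) \<and> (\<forall>i < n. IB_step gt B (run i) (run (Suc i))))"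

definition fair_run :: "('f, 'v) trs \<Rightarrow> (nat \<Rightarrow> ('f, 'v) trs \<times> ('f, 'v) trs) \<Rightarrow> nat \<Rightarrow> bool" where
  "fair_run B run n = (left_linear (snd (run n)) \<and>
     PCP (snd (run n)) \<union> PCP_pm (snd (run n)) (Bpm B)
       \<subseteq> join_mod B (snd (run n)) \<union> (\<Union>i \<in> {0..n}. sym_step (fst (run i))))"

end

theory Submission
  imports Defs
begin

lemma is_pos_Fun_Cons[simp]: "is_pos (Fun f ts) (i # p) \<longleftrightarrow> i < length ts \<and> is_pos (ts ! i) p"
  by (auto elim: is_pos.cases intro: is_pos.intros)
lemma is_pos_Var_Cons[simp]: "\<not> is_pos (Var x) (i # p)"
  by (auto elim: is_pos.cases)
lemma is_pos_Nil[simp]: "is_pos t []" by (rule is_pos.root)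

lemma poss_simps[simp]:
  "[] \<in> poss t"
  "(i # p) \<in> poss (Fun f ts) \<longleftrightarrow> i < length ts \<and> p \<in> poss (ts ! i)"
  "(i # p) \<notin> poss (Var x)"
  by (auto simp: poss_def)

lemma subt_at_append[simp]: "subt_at t (p @ q) = subt_at (subt_at t p) q"
  by (induction t p rule: subt_at.induct) (auto, case_tac q, auto)

lemma poss_append[simp]: "(p @ q) \<in> poss t \<longleftrightarrow> p \<in> poss t \<and> q \<in> poss (subt_at t p)"
  by (induction t p rule: subt_at.induct) auto

lemma replace_at_append:
  "p \<in> poss t \<Longrightarrow> replace_at t (p @ q) s = replace_at t p (replace_at (subt_at t p) q s)"
  by (induction t p rule: subt_at.induct) auto

lemma subt_at_replace_at[simp]: "p \<in> poss t \<Longrightarrow> subt_at (replace_at t p s) p = s"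
  by (induction t p rule: subt_at.induct) auto

lemma replace_at_subt_at[simp]: "replace_at t p (subt_at t p) = t"
  by (induction t p rule: subt_at.induct) auto

lemma replace_at_replace_at[simp]: "p \<in> poss t \<Longrightarrow> replace_at (replace_at t p s) p s' = replace_at t p s'"
  by (induction t p rule: subt_at.induct) auto

lemma poss_replace_at[simp]: "p \<in> poss t \<Longrightarrow> p \<in> poss (replace_at t p s)"
  by (induction t p rule: subt_at.induct) auto

lemma poss_replace_at_below: "p \<in> poss t \<Longrightarrow> q \<in> poss s \<Longrightarrow> p @ q \<in> poss (replace_at t p s)"
  by simp

lemma parallel_subt_replace:
  assumes "i \<noteq> j" "r @ i # p \<in> poss t"
  shows "subt_at (replace_at t (r @ i # p) s) (r @ j # q) = subt_at t (r @ j # q)"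
    and "(r @ j # q \<in> poss (replace_at t (r @ i # p) s)) = (r @ j # q \<in> poss t)"
proof -
  have r: "r \<in> poss t" and ip: "i # p \<in> poss (subt_at t r)" using assms by auto
  obtain f ts where F: "subt_at t r = Fun f ts" using ip by (cases "subt_at t r") auto
  have e: "replace_at t (r @ i # p) s = replace_at t r (Fun f (ts[i := replace_at (ts ! i) p s]))"
    using replace_at_append[OF r] F by simp
  show "subt_at (replace_at t (r @ i # p) s) (r @ j # q) = subt_at t (r @ j # q)"
    unfolding e using r F assms(1) by simp
  show "(r @ j # q \<in> poss (replace_at t (r @ i # p) s)) = (r @ j # q \<in> poss t)"
    unfolding e using r F assms(1) by simp
qed

lemma parallel_replace_comm:
  assumes "i \<noteq> j" "r @ i # p \<in> poss t" "r @ j # q \<in> poss t"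
  shows "replace_at (replace_at t (r @ i # p) s) (r @ j # q) s' =
         replace_at (replace_at t (r @ j # q) s') (r @ i # p) s"
proof -
  have r: "r \<in> poss t" and ip: "i # p \<in> poss (subt_at t r)" using assms by auto
  obtain f ts where F: "subt_at t r = Fun f ts" using ip by (cases "subt_at t r") auto
  have e1: "replace_at t (r @ i # p) s = replace_at t r (Fun f (ts[i := replace_at (ts ! i) p s]))"
    using replace_at_append[OF r] F by simp
  have e2: "replace_at t (r @ j # q) s' = replace_at t r (Fun f (ts[j := replace_at (ts ! j) q s']))"
    using replace_at_append[OF r] F by simp
  show ?thesis unfolding e1 e2 using r F assms
    by (simp add: replace_at_append list_update_swap)
qed

lemma pos_cases:
  obtains (pre) q where "p2 = p1 @ q" | (post) q where "p1 = p2 @ q"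
  | (par) r i j p q where "i \<noteq> j" "p1 = r @ i # p" "p2 = r @ j # q"
proof (induction p1 arbitrary: p2 thesis)
  case Nil then show ?case by auto
next
  case (Cons a p1)
  show ?case
  proof (cases p2)
    case Nil then show ?thesis using Cons.prems(2) by auto
  next
    case (Cons b p2')
    show ?thesis
    proof (cases "a = b")
      case False
      have e1: "a # p1 = [] @ a # p1" and e2: "p2 = [] @ b # p2'" using \<open>p2 = b # p2'\<close> by auto
      show ?thesis using Cons.prems(3)[OF False e1 e2] .
    next
      case True
      show ?thesis
      proof (rule Cons.IH[of p2'])
        fix q assume "p2' = p1 @ q" then show ?thesis using Cons.prems(1) True \<open>p2 = b # p2'\<close> by auto
      next
        fix q assume "p1 = p2' @ q" then show ?thesis using Cons.prems(2) True \<open>p2 = b # p2'\<close> by auto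
      next
        fix r i j p q assume "i \<noteq> j" "p1 = r @ i # p" "p2' = r @ j # q"
        then have e1: "a # p1 = (a # r) @ i # p" and e2: "p2 = (a # r) @ j # q" using True \<open>p2 = b # p2'\<close> by auto
        show ?thesis using Cons.prems(3)[OF \<open>i \<noteq> j\<close> e1 e2] .
      qed
    qed
  qed
qed

lemma poss_subst: "p \<in> poss t \<Longrightarrow> p \<in> poss (t \<cdot> \<sigma>)"
  by (induction t p rule: subt_at.induct) auto

lemma subt_at_subst: "p \<in> poss t \<Longrightarrow> subt_at (t \<cdot> \<sigma>) p = subt_at t p \<cdot> \<sigma>"
  by (induction t p rule: subt_at.induct) auto

lemma replace_at_subst: "p \<in> poss t \<Longrightarrow> replace_at (t \<cdot> \<sigma>) p (s \<cdot> \<sigma>) = replace_at t p s \<cdot> \<sigma>"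
  by (induction t p rule: subt_at.induct) (auto simp: map_update)

lemma subst_subst: "t \<cdot> \<sigma> \<cdot> \<tau> = t \<cdot> (\<lambda>x. \<sigma> x \<cdot> \<tau>)"
  by (induction t) auto

lemma subst_cong: "(\<And>x. x \<in> vars_term t \<Longrightarrow> \<sigma> x = \<tau> x) \<Longrightarrow> t \<cdot> \<sigma> = t \<cdot> \<tau>"
  by (induction t) auto

lemma subst_Var[simp]: "t \<cdot> Var = t"
  by (induction t) (auto simp: map_idI)

lemma vars_subst: "vars_term (t \<cdot> \<sigma>) = (\<Union>x \<in> vars_term t. vars_term (\<sigma> x))"
  by (induction t) auto

lemma poss_subst_cases:
  assumes "p \<in> poss (t \<cdot> \<sigma>)"
  obtains (funpos) "p \<in> poss t" "\<not> is_Var_term (subt_at t p)"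
  | (var) q1 q2 x where "p = q1 @ q2" "q1 \<in> poss t" "subt_at t q1 = Var x" "q2 \<in> poss (\<sigma> x)"
  using assms
proof (induction t arbitrary: p thesis)
  case (Var x)
  then show ?case by (metis append_Nil poss_simps(1) subst_apply_term.simps(1) subt_at.simps(1))
next
  case (Fun f ts)
  show ?case
  proof (cases p)
    case Nil then show ?thesis using Fun.prems(1) by (auto simp: is_Var_term_def)
  next
    case (Cons i p')
    then have i: "i < length ts" "p' \<in> poss (ts ! i \<cdot> \<sigma>)" using Fun.prems(3) by auto
    show ?thesis
    proof (rule Fun.IH[of "ts ! i" p'])
      show "ts ! i \<in> set ts" using i by auto
      show "p' \<in> poss (ts ! i \<cdot> \<sigma>)" by fact
    next
      assume "p' \<in> poss (ts ! i)" "\<not> is_Var_term (subt_at (ts ! i) p')"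
      then show ?thesis using Fun.prems(1) Cons i by auto
    next
      fix q1 q2 x assume "p' = q1 @ q2" "q1 \<in> poss (ts ! i)" "subt_at (ts ! i) q1 = Var x" "q2 \<in> poss (\<sigma> x)"
      then show ?thesis using Fun.prems(2)[of "i # q1" q2 x] Cons i by auto
    qed
  qed
qed

lemma replace_at_ctxt: "p \<in> poss t \<Longrightarrow> \<exists>C. \<forall>s. replace_at t p s = ctxt_apply C s"
proof (induction t p rule: subt_at.induct)
  case (1 t) then show ?case by (auto intro: exI[of _ Hole])
next
  case (2 f ts i p)
  then obtain C where C: "\<forall>s. replace_at (ts ! i) p s = ctxt_apply C s" by auto
  have i: "i < length ts" using 2 by auto
  show ?case
    apply (rule exI[of _ "More f (take i ts) C (drop (Suc i) ts)"])
    using C i by (auto simp: upd_conv_take_nth_drop)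
next
  case (3 x i p) then show ?case by auto
qed

lemma rstepI: "(l, r) \<in> R \<Longrightarrow> p \<in> poss s \<Longrightarrow> subt_at s p = l \<cdot> \<sigma> \<Longrightarrow> t = replace_at s p (r \<cdot> \<sigma>)
  \<Longrightarrow> (s, t) \<in> rstep R"
  unfolding rstep_def by blast

lemma rstepE: assumes "(s, t) \<in> rstep R"
  obtains l r p \<sigma> where "(l, r) \<in> R" "p \<in> poss s" "subt_at s p = l \<cdot> \<sigma>" "t = replace_at s p (r \<cdot> \<sigma>)"
  using assms unfolding rstep_def by blast

lemma rstep_rule: "(l, r) \<in> R \<Longrightarrow> (l \<cdot> \<sigma>, r \<cdot> \<sigma>) \<in> rstep R"
  by (rule rstepI[of l r R "[]"]) auto

lemma rstep_replace: assumes "(s, t) \<in> rstep R" "p \<in> poss u"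
  shows "(replace_at u p s, replace_at u p t) \<in> rstep R"
proof -
  from assms(1) obtain l r q \<sigma> where "(l, r) \<in> R" "q \<in> poss s" "subt_at s q = l \<cdot> \<sigma>" "t = replace_at s q (r \<cdot> \<sigma>)"
    by (rule rstepE)
  then show ?thesis using assms(2)
    by (intro rstepI[of l r R "p @ q" _ \<sigma>]) (auto simp: replace_at_append)
qed

lemma rstep_subst: assumes "(s, t) \<in> rstep R"
  shows "(s \<cdot> \<sigma>, t \<cdot> \<sigma>) \<in> rstep R"
proof -
  from assms(1) obtain l r q \<tau> where "(l, r) \<in> R" "q \<in> poss s" "subt_at s q = l \<cdot> \<tau>" "t = replace_at s q (r \<cdot> \<tau>)"
    by (rule rstepE)
  then show ?thesis
    by (intro rstepI[of l r R q _ "\<lambda>x. \<tau> x \<cdot> \<sigma>"])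
       (auto simp: poss_subst subt_at_subst subst_subst replace_at_subst[symmetric])
qed

lemma rstep_mono: "R \<subseteq> S \<Longrightarrow> rstep R \<subseteq> rstep S"
  unfolding rstep_def by blast

lemma rstep_union: "rstep (R \<union> S) = rstep R \<union> rstep S"
  unfolding rstep_def by blast

lemma rstep_converse_sub: "rstep (R\<inverse>) \<subseteq> (rstep R)\<inverse>"
proof
  fix x assume "x \<in> rstep (R\<inverse>)"
  then obtain s t where x: "x = (s, t)" and st: "(s, t) \<in> rstep (R\<inverse>)" by (cases x) auto
  from st obtain l r p \<sigma> where "(l, r) \<in> R\<inverse>" "p \<in> poss s" "subt_at s p = l \<cdot> \<sigma>" "t = replace_at s p (r \<cdot> \<sigma>)"
    by (rule rstepE)
  then have "(t, s) \<in> rstep R"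
    by (intro rstepI[of r l R p _ \<sigma>]) (auto, metis replace_at_replace_at replace_at_subt_at)
  then show "x \<in> (rstep R)\<inverse>" using x by auto
qed

lemma rstep_converse: "rstep (R\<inverse>) = (rstep R)\<inverse>"
  using rstep_converse_sub[of R] rstep_converse_sub[of "R\<inverse>"] by auto

lemma sym_step_Bpm: "sym_step B = rstep (Bpm B)"
  unfolding sym_step_def Bpm_def rstep_union rstep_converse by simp

definition rel_on :: "'a set \<Rightarrow> 'a rel \<Rightarrow> 'a rel" where
  "rel_on P X = {(x, y) \<in> X. x \<in> P \<and> y \<in> P}"

lemma rel_on_mono: "P \<subseteq> Q \<Longrightarrow> X \<subseteq> Y \<Longrightarrow> (rel_on P X)\<^sup>* \<subseteq> (rel_on Q Y)\<^sup>*"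
  unfolding rel_on_def by (rule rtrancl_mono) blast

lemma rtrancl_map:
  assumes "(x, y) \<in> X\<^sup>*" "\<And>a b. (a, b) \<in> X \<Longrightarrow> (f a, f b) \<in> Y"
  shows "(f x, f y) \<in> Y\<^sup>*"
  using assms(1) by induction (auto intro: rtrancl_into_rtrancl assms(2))

lemma rel_on_map:
  assumes "(x, y) \<in> (rel_on P X)\<^sup>*" "\<And>a b. (a, b) \<in> X \<Longrightarrow> (f a, f b) \<in> Y"
    "\<And>a. a \<in> P \<Longrightarrow> f a \<in> Q"
  shows "(f x, f y) \<in> (rel_on Q Y)\<^sup>*"
  using assms(1) by (rule rtrancl_map) (auto simp: rel_on_def assms(2,3))

lemma rel_on_converse: "(x, y) \<in> (rel_on P X)\<^sup>* \<Longrightarrow> (y, x) \<in> (rel_on P (X\<inverse>))\<^sup>*"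
proof -
  assume "(x, y) \<in> (rel_on P X)\<^sup>*"
  then have "(y, x) \<in> ((rel_on P X)\<inverse>)\<^sup>*" by (simp add: rtrancl_converse)
  moreover have "(rel_on P X)\<inverse> = rel_on P (X\<inverse>)" unfolding rel_on_def by auto
  ultimately show ?thesis by simp
qed

lemma rel_on_class:
  assumes "(x, y) \<in> X\<^sup>*"
  shows "(x, y) \<in> (rel_on {w. (x, w) \<in> X\<^sup>*} X)\<^sup>*"
  using assms
proof induction
  case base then show ?case by simp
next
  case (step y z)
  then have "(y, z) \<in> rel_on {w. (x, w) \<in> X\<^sup>*} X" unfolding rel_on_def by auto
  from rtrancl_into_rtrancl[OF step(3) this] show ?case .
qed

lemma sym_step_replace: "(s, t) \<in> sym_step E \<Longrightarrow> p \<in> poss u \<Longrightarrow>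
  (replace_at u p s, replace_at u p t) \<in> sym_step E"
  unfolding sym_step_def by (auto intro: rstep_replace)

lemma sym_step_subst: "(s, t) \<in> sym_step E \<Longrightarrow> (s \<cdot> \<sigma>, t \<cdot> \<sigma>) \<in> sym_step E"
  unfolding sym_step_def by (auto intro: rstep_subst)

lemma conv_replace: "(s, t) \<in> conv E \<Longrightarrow> p \<in> poss u \<Longrightarrow>
  (replace_at u p s, replace_at u p t) \<in> conv E"
  unfolding conv_def by (erule rtrancl_map) (rule sym_step_replace)

lemma conv_subst: "(s, t) \<in> conv E \<Longrightarrow> (s \<cdot> \<sigma>, t \<cdot> \<sigma>) \<in> conv E"
  unfolding conv_def by (erule rtrancl_map) (rule sym_step_subst)

lemma sym_step_sym: "(s, t) \<in> sym_step E \<Longrightarrow> (t, s) \<in> sym_step E"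
  unfolding sym_step_def by auto

lemma conv_sym: "(s, t) \<in> conv E \<Longrightarrow> (t, s) \<in> conv E"
proof -
  assume "(s, t) \<in> conv E"
  then have "(t, s) \<in> ((sym_step E)\<inverse>)\<^sup>*" unfolding conv_def by (simp add: rtrancl_converse)
  moreover have "(sym_step E)\<inverse> = sym_step E" unfolding sym_step_def by auto
  ultimately show ?thesis unfolding conv_def by simp
qed

lemma conv_trans: "(s, t) \<in> conv E \<Longrightarrow> (t, u) \<in> conv E \<Longrightarrow> (s, u) \<in> conv E"
  unfolding conv_def by simp

lemma conv_refl[simp]: "(s, s) \<in> conv E"
  unfolding conv_def by simp

lemma rstep_in_conv: "(s, t) \<in> rstep E \<Longrightarrow> (s, t) \<in> conv E"
  unfolding conv_def sym_step_def by auto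

lemma rstep_sub_conv:
  assumes "X \<subseteq> conv Y" shows "rstep X \<subseteq> conv Y"
proof
  fix x assume "x \<in> rstep X"
  then obtain s t where x: "x = (s, t)" and st: "(s, t) \<in> rstep X" by (cases x) auto
  from st obtain l r p \<sigma> where lr: "(l, r) \<in> X" "p \<in> poss s" "subt_at s p = l \<cdot> \<sigma>" "t = replace_at s p (r \<cdot> \<sigma>)"
    by (rule rstepE)
  have "(l \<cdot> \<sigma>, r \<cdot> \<sigma>) \<in> conv Y" using assms lr(1) by (auto intro: conv_subst)
  from conv_replace[OF this lr(2)] show "x \<in> conv Y"
    using lr x by (metis replace_at_subt_at)
qed

lemma conv_sub_conv:
  assumes "X \<subseteq> conv Y" shows "conv X \<subseteq> conv Y"
proof -
  have "sym_step X \<subseteq> conv Y" using rstep_sub_conv[OF assms] unfolding sym_step_def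
    by (auto intro: conv_sym)
  then show ?thesis unfolding conv_def[of X]
    by (metis conv_def rtrancl_subset_rtrancl rtrancl_idemp)
qed

lemma conv_mono: "X \<subseteq> Y \<Longrightarrow> conv X \<subseteq> conv Y"
  unfolding conv_def sym_step_def using rstep_mono[of X Y] by (intro rtrancl_mono) auto

lemma sub_conv: "X \<subseteq> conv X"
proof
  fix x assume "x \<in> X"
  then obtain l r where x: "x = (l, r)" "(l, r) \<in> X" by (cases x) auto
  from rstep_rule[OF x(2), of Var] have "(l, r) \<in> rstep X" by simp
  then show "x \<in> conv X" using x rstep_in_conv by simp
qed

locale cmod =
  fixes gt B :: "('f, 'v) trs"
  assumes ord: "B_compatible_reduction_order B gt"
begin

abbreviation sim where "sim \<equiv> simB B"

lemma gt_trans: "(s, t) \<in> gt \<Longrightarrow> (t, u) \<in> gt \<Longrightarrow> (s, u) \<in> gt"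
  using ord unfolding B_compatible_reduction_order_def trans_def by blast

lemma gt_irrefl: "(s, s) \<notin> gt"
  using ord unfolding B_compatible_reduction_order_def irrefl_def by blast

lemma gt_wf: "wf (gt\<inverse>)"
  using ord unfolding B_compatible_reduction_order_def by blast

lemma gt_subst: "(s, t) \<in> gt \<Longrightarrow> (s \<cdot> \<sigma>, t \<cdot> \<sigma>) \<in> gt"
  using ord unfolding B_compatible_reduction_order_def by blast

lemma gt_ctxt: "(s, t) \<in> gt \<Longrightarrow> (ctxt_apply C s, ctxt_apply C t) \<in> gt"
  using ord unfolding B_compatible_reduction_order_def by blast

lemma gt_replace: "(s, t) \<in> gt \<Longrightarrow> p \<in> poss u \<Longrightarrow> (replace_at u p s, replace_at u p t) \<in> gt"
  using replace_at_ctxt[of p u] gt_ctxt by metis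

lemma compat: "(s, s') \<in> sim \<Longrightarrow> (s', t') \<in> gt \<Longrightarrow> (t', t) \<in> sim \<Longrightarrow> (s, t) \<in> gt"
  using ord unfolding B_compatible_reduction_order_def by blast

lemma sim_gt: "(s, s') \<in> sim \<Longrightarrow> (s', t) \<in> gt \<Longrightarrow> (s, t) \<in> gt"
  using compat[of s s' t t] by (simp add: simB_def)

lemma gt_sim: "(s, t') \<in> gt \<Longrightarrow> (t', t) \<in> sim \<Longrightarrow> (s, t) \<in> gt"
  using compat[of s s t' t] by (simp add: simB_def)

lemma sim_sym: "(s, t) \<in> sim \<Longrightarrow> (t, s) \<in> sim"
  unfolding simB_def by (rule conv_sym)

lemma sim_trans: "(s, t) \<in> sim \<Longrightarrow> (t, u) \<in> sim \<Longrightarrow> (s, u) \<in> sim"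
  unfolding simB_def by (rule conv_trans)

lemma gt_not_sim: "(s, t) \<in> gt \<Longrightarrow> (s, t) \<notin> sim"
  using gt_sim[of s t s] gt_irrefl sim_sym by blast

lemma rstep_gt: "R \<subseteq> gt \<Longrightarrow> (s, t) \<in> rstep R \<Longrightarrow> (s, t) \<in> gt"
  by (erule rstepE) (metis gt_replace gt_subst replace_at_subt_at subsetD)

lemma rsteps_ge: assumes "R \<subseteq> gt" "(s, t) \<in> (rstep R)\<^sup>*" shows "s = t \<or> (s, t) \<in> gt"
  using assms(2) by (induction rule: rtrancl_induct) (auto dest: rstep_gt[OF assms(1)] intro: gt_trans)

lemma var_pos: "x \<in> vars_term t \<Longrightarrow> \<exists>q \<in> poss t. subt_at t q = Var x"
proof (induction t)
  case (Var y) then show ?case by (auto intro: bexI[of _ "[]"])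
next
  case (Fun f ts)
  then obtain i where i: "i < length ts" "x \<in> vars_term (ts ! i)" by (auto simp: in_set_conv_nth)
  with Fun.IH obtain q where "q \<in> poss (ts ! i)" "subt_at (ts ! i) q = Var x" by (meson nth_mem)
  then show ?case using i by (intro bexI[of _ "i # q"]) auto
qed

lemma gt_vars: assumes "(s, t) \<in> gt" shows "vars_term t \<subseteq> vars_term s"
proof
  fix x assume x: "x \<in> vars_term t"
  show "x \<in> vars_term s"
  proof (rule ccontr)
    assume nx: "x \<notin> vars_term s"
    define \<sigma> where "\<sigma> = Var(x := s)"
    have s\<sigma>: "s \<cdot> \<sigma> = s" using nx by (auto simp: \<sigma>_def intro: trans[OF subst_cong subst_Var])
    obtain q where q: "q \<in> poss t" "subt_at t q = Var x" using var_pos[OF x] by auto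
    obtain C where C: "\<forall>w. replace_at (t \<cdot> \<sigma>) q w = ctxt_apply C w"
      using replace_at_ctxt[OF poss_subst[OF q(1)]] by auto
    have "subt_at (t \<cdot> \<sigma>) q = s" using q by (simp add: subt_at_subst \<sigma>_def)
    then have tC: "t \<cdot> \<sigma> = ctxt_apply C s" using C replace_at_subt_at by metis
    have g0: "(s, ctxt_apply C s) \<in> gt" using gt_subst[OF assms, of \<sigma>] s\<sigma> tC by simp
    define g where "g = (\<lambda>k. ((ctxt_apply C) ^^ k) s)"
    have "\<forall>k. (g k, g (Suc k)) \<in> gt"
    proof
      fix k show "(g k, g (Suc k)) \<in> gt"
        by (induction k) (auto simp: g_def g0 intro: gt_ctxt)
    qed
    then have "\<not> wf (gt\<inverse>)" unfolding wf_iff_no_infinite_down_chain by auto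
    then show False using gt_wf by simp
  qed
qed

section \<open>well-behaved conversions\<close>

definition Ok where
  "Ok s t = {w. w = s \<or> w = t \<or> (s, w) \<in> gt \<or> (t, w) \<in> gt \<or> ((w, s) \<in> sim \<and> (w, t) \<in> sim)}"

definition OkConv where
  "OkConv R s t \<longleftrightarrow> (s, t) \<in> (rel_on (Ok s t) (sym_step (R \<union> B)))\<^sup>*"

lemma Ok_sym: "Ok s t = Ok t s" unfolding Ok_def by auto

lemma sym_step_conv: "(sym_step X)\<inverse> = sym_step X"
  unfolding sym_step_def by auto

lemma OkConv_sym: "OkConv R s t \<Longrightarrow> OkConv R t s"
  unfolding OkConv_def using rel_on_converse[of s t "Ok s t" "sym_step (R \<union> B)"]
  by (simp add: Ok_sym sym_step_conv)

lemma OkConv_refl: "OkConv R s s" unfolding OkConv_def by simp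

lemma OkConv_sim: assumes "(s, t) \<in> sim" shows "OkConv R s t"
proof -
  have "(s, t) \<in> (rel_on {w. (s, w) \<in> (sym_step B)\<^sup>*} (sym_step B))\<^sup>*"
    using assms unfolding simB_def conv_def by (rule rel_on_class)
  moreover have "{w. (s, w) \<in> (sym_step B)\<^sup>*} \<subseteq> Ok s t"
  proof
    fix w assume "w \<in> {w. (s, w) \<in> (sym_step B)\<^sup>*}"
    then have "(s, w) \<in> sim" unfolding simB_def conv_def by simp
    then have "(w, s) \<in> sim" "(w, t) \<in> sim" using assms sim_sym sim_trans by blast+
    then show "w \<in> Ok s t" unfolding Ok_def by auto
  qed
  moreover have "sym_step B \<subseteq> sym_step (R \<union> B)" unfolding sym_step_def rstep_union by auto
  ultimately show ?thesis unfolding OkConv_def using rel_on_mono by blast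
qed

lemma Ok_mono1: assumes "(s, s') \<in> gt" shows "Ok s' t \<subseteq> Ok s t"
proof
  fix w assume "w \<in> Ok s' t"
  then consider "w = s'" | "w = t" | "(s', w) \<in> gt" | "(t, w) \<in> gt" | "(w, s') \<in> sim" "(w, t) \<in> sim"
    unfolding Ok_def by auto
  then show "w \<in> Ok s t"
  proof cases
    case 1 then show ?thesis using assms unfolding Ok_def by auto
  next
    case 2 then show ?thesis unfolding Ok_def by auto
  next
    case 3 then show ?thesis using gt_trans[OF assms] unfolding Ok_def by auto
  next
    case 4 then show ?thesis unfolding Ok_def by auto
  next
    case 5 then show ?thesis using gt_sim[OF assms sim_sym[OF 5(1)]] unfolding Ok_def by auto
  qed
qed

lemma Ok_trans1: assumes "(s, u) \<in> gt \<or> (t, u) \<in> gt" shows "Ok s u \<subseteq> Ok s t"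
proof
  fix w assume "w \<in> Ok s u"
  then consider "w = s" | "w = u" | "(s, w) \<in> gt" | "(u, w) \<in> gt" | "(w, s) \<in> sim" "(w, u) \<in> sim"
    unfolding Ok_def by auto
  then show "w \<in> Ok s t"
  proof cases
    case 1 then show ?thesis unfolding Ok_def by auto
  next
    case 2 then show ?thesis using assms unfolding Ok_def by auto
  next
    case 3 then show ?thesis unfolding Ok_def by auto
  next
    case 4 then show ?thesis using assms gt_trans unfolding Ok_def by blast
  next
    case 5 then show ?thesis using assms gt_sim[OF _ sim_sym[OF 5(2)]] unfolding Ok_def by blast
  qed
qed

lemma Ok_trans2: assumes "(s, u) \<in> gt \<or> (t, u) \<in> gt" shows "Ok u t \<subseteq> Ok s t"
proof -
  have "Ok t u \<subseteq> Ok t s" using Ok_trans1[of t u s] assms by blast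
  then show ?thesis by (metis Ok_sym)
qed

lemma OkConv_trans:
  assumes "OkConv R s u" "OkConv R u t" "(s, u) \<in> gt \<or> (t, u) \<in> gt"
  shows "OkConv R s t"
proof -
  have "(s, u) \<in> (rel_on (Ok s t) (sym_step (R \<union> B)))\<^sup>*"
    using assms(1) Ok_trans1[OF assms(3)] rel_on_mono unfolding OkConv_def by blast
  moreover have "(u, t) \<in> (rel_on (Ok s t) (sym_step (R \<union> B)))\<^sup>*"
    using assms(2) Ok_trans2[OF assms(3)] rel_on_mono unfolding OkConv_def by blast
  ultimately show ?thesis unfolding OkConv_def by simp
qed

lemma OkConv_step:
  assumes "R \<subseteq> gt" "(s, s') \<in> rstep R" "OkConv R s' t" shows "OkConv R s t"
proof -
  have g: "(s, s') \<in> gt" using rstep_gt assms by blast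
  have "(s, s') \<in> (rel_on (Ok s t) (sym_step (R \<union> B)))\<^sup>*"
    using g assms(2) unfolding rel_on_def Ok_def sym_step_def rstep_union by auto
  moreover have "(s', t) \<in> (rel_on (Ok s t) (sym_step (R \<union> B)))\<^sup>*"
    using assms(3) Ok_mono1[OF g] rel_on_mono unfolding OkConv_def by blast
  ultimately show ?thesis unfolding OkConv_def by simp
qed

lemma OkConv_join: assumes "R \<subseteq> gt" "(s, t) \<in> join_mod B R" shows "OkConv R s t"
proof -
  obtain a b where sa: "(s, a) \<in> (rstep R)\<^sup>*" and ab: "(a, b) \<in> sim" and bt: "(b, t) \<in> ((rstep R)\<inverse>)\<^sup>*"
    using assms(2) unfolding join_mod_def by auto
  have tb: "(t, b) \<in> (rstep R)\<^sup>*" using bt by (simp add: rtrancl_converse)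
  have "OkConv R a t" using tb
  proof (induction rule: converse_rtrancl_induct)
    case base then show ?case using OkConv_sim[OF ab] .
  next
    case (step y z)
    show ?case using OkConv_sym[OF OkConv_step[OF assms(1) step(1) OkConv_sym[OF step(3)]]] .
  qed
  with sa show ?thesis
  proof (induction rule: converse_rtrancl_induct)
    case base then show ?case .
  next
    case (step y z) then show ?case using OkConv_step[OF assms(1)] by blast
  qed
qed

lemma sym_step_RB_replace: "(a, b) \<in> sym_step (R \<union> B) \<Longrightarrow> p \<in> poss u \<Longrightarrow>
  (replace_at u p a, replace_at u p b) \<in> sym_step (R \<union> B)"
  by (rule sym_step_replace)

lemma sim_replace: "(a, b) \<in> sim \<Longrightarrow> p \<in> poss u \<Longrightarrow> (replace_at u p a, replace_at u p b) \<in> sim"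
  unfolding simB_def by (rule conv_replace)

lemma sim_subst: "(a, b) \<in> sim \<Longrightarrow> (a \<cdot> \<sigma>, b \<cdot> \<sigma>) \<in> sim"
  unfolding simB_def by (rule conv_subst)

lemma poss_replace_general: "p \<in> poss u \<Longrightarrow> poss (replace_at u p a) \<supseteq> {p}" by simp

lemma OkConv_replace:
  assumes "OkConv R s t" "p \<in> poss u"
  shows "OkConv R (replace_at u p s) (replace_at u p t)"
  unfolding OkConv_def
proof (rule rel_on_map[OF assms(1)[unfolded OkConv_def], of "\<lambda>w. replace_at u p w"])
  fix a b assume "(a, b) \<in> sym_step (R \<union> B)"
  then show "(replace_at u p a, replace_at u p b) \<in> sym_step (R \<union> B)" using assms(2) by (rule sym_step_replace)
next
  fix a assume "a \<in> Ok s t"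
  then show "replace_at u p a \<in> Ok (replace_at u p s) (replace_at u p t)"
    unfolding Ok_def using gt_replace[OF _ assms(2)] sim_replace[OF _ assms(2)] by auto
qed

lemma OkConv_subst:
  assumes "OkConv R s t"
  shows "OkConv R (s \<cdot> \<sigma>) (t \<cdot> \<sigma>)"
  unfolding OkConv_def
proof (rule rel_on_map[OF assms(1)[unfolded OkConv_def], of "\<lambda>w. w \<cdot> \<sigma>"])
  fix a b assume "(a, b) \<in> sym_step (R \<union> B)"
  then show "(a \<cdot> \<sigma>, b \<cdot> \<sigma>) \<in> sym_step (R \<union> B)" by (rule sym_step_subst)
next
  fix a assume "a \<in> Ok s t"
  then show "a \<cdot> \<sigma> \<in> Ok (s \<cdot> \<sigma>) (t \<cdot> \<sigma>)"
    unfolding Ok_def using gt_subst sim_subst by auto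
qed

lemma OkConv_rstep:
  assumes "\<forall>(l, r) \<in> X. OkConv R l r" "(s, t) \<in> rstep X"
  shows "OkConv R s t"
proof -
  from assms(2) obtain l r p \<sigma> where lr: "(l, r) \<in> X" "p \<in> poss s" "subt_at s p = l \<cdot> \<sigma>" "t = replace_at s p (r \<cdot> \<sigma>)"
    by (rule rstepE)
  have "OkConv R (l \<cdot> \<sigma>) (r \<cdot> \<sigma>)" using assms(1) lr(1) OkConv_subst by auto
  from OkConv_replace[OF this lr(2)] show ?thesis using lr by (metis replace_at_subt_at)
qed

lemma OkConv_sym_step:
  assumes "\<forall>(l, r) \<in> X. OkConv R l r" "(s, t) \<in> sym_step X"
  shows "OkConv R s t"
  using assms OkConv_rstep OkConv_sym unfolding sym_step_def by blast

lemma OkConv_conv: "OkConv R s t \<Longrightarrow> (s, t) \<in> conv (R \<union> B)"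
  unfolding OkConv_def conv_def rel_on_def
  by (erule rtrancl_mono[THEN subsetD, rotated]) auto

end

section \<open>Existence of most general unifiers\<close>

lemma finite_vars_term[simp]: "finite (vars_term t)"
  by (induction t) auto

lemma size_Fun_arg: "t \<in> set ts \<Longrightarrow> size t < size (Fun f ts)"
  using size_list_estimation'[of t ts "size t" size] by auto

lemma size_subst_var: "x \<in> vars_term t \<Longrightarrow> size (\<tau> x) \<le> size (t \<cdot> \<tau>) \<and> (t \<noteq> Var x \<longrightarrow> size (\<tau> x) < size (t \<cdot> \<tau>))"
proof (induction t)
  case (Var y) then show ?case by auto
next
  case (Fun f ts)
  then obtain t where t: "t \<in> set ts" "x \<in> vars_term t" by auto
  with Fun.IH have "size (\<tau> x) \<le> size (t \<cdot> \<tau>)" by auto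
  moreover have "size (t \<cdot> \<tau>) < size (Fun f ts \<cdot> \<tau>)"
  proof -
    have "t \<cdot> \<tau> \<in> set (map (\<lambda>t. t \<cdot> \<tau>) ts)" using t(1) by auto
    from size_Fun_arg[OF this, of f] show ?thesis by simp
  qed
  ultimately show ?case by auto
qed

lemma occurs_fail: "x \<in> vars_term t \<Longrightarrow> t \<noteq> Var x \<Longrightarrow> \<tau> x \<noteq> t \<cdot> \<tau>"
  using size_subst_var[of x t \<tau>] by auto

type_synonym ('f, 'v) eqs = "(('f, 'v) term \<times> ('f, 'v) term) list"

definition unifies :: "('f, 'v) subst \<Rightarrow> ('f, 'v) eqs \<Rightarrow> bool" where
  "unifies \<tau> E \<longleftrightarrow> (\<forall>(a, b) \<in> set E. a \<cdot> \<tau> = b \<cdot> \<tau>)"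

definition varsE :: "('f, 'v) eqs \<Rightarrow> 'v set" where
  "varsE E = (\<Union>(a, b) \<in> set E. vars_term a \<union> vars_term b)"

definition sizeE :: "('f, 'v) eqs \<Rightarrow> nat" where
  "sizeE E = sum_list (map (\<lambda>(a, b). size a + size b + 1) E)"

lemma finite_varsE[simp]: "finite (varsE E)"
  unfolding varsE_def by auto

lemma sizeE_zip: "length as = length bs \<Longrightarrow> sizeE (zip as bs) \<le> size_list size as + size_list size bs"
  unfolding sizeE_def by (induction as bs rule: list_induct2) auto

lemma sizeE_append[simp]: "sizeE (E @ F) = sizeE E + sizeE F"
  unfolding sizeE_def by auto

lemma sizeE_Cons[simp]: "sizeE ((a, b) # E) = size a + size b + 1 + sizeE E"
  unfolding sizeE_def by auto

lemma size_list_ge_length: "length as \<le> size_list size as"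
  by (induction as) auto

lemma unifies_zip: "length as = length bs \<Longrightarrow>
  unifies \<tau> (zip as bs) \<longleftrightarrow> map (\<lambda>t. t \<cdot> \<tau>) as = map (\<lambda>t. t \<cdot> \<tau>) bs"
  unfolding unifies_def by (induction as bs rule: list_induct2) auto

definition mgu_list where
  "mgu_list \<sigma> E \<longleftrightarrow> unifies \<sigma> E \<and> (\<forall>\<tau>. unifies \<tau> E \<longrightarrow> (\<exists>\<delta>. \<forall>x. \<tau> x = \<sigma> x \<cdot> \<delta>))"

lemma mgu_list_exists_aux:
  "\<forall>E :: ('f, 'v) eqs. card (varsE E) = n \<longrightarrow> sizeE E = m \<longrightarrow> (\<exists>\<tau>. unifies \<tau> E) \<longrightarrow> (\<exists>\<sigma>. mgu_list \<sigma> E)"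
proof (induction n arbitrary: m rule: less_induct)
  case (less n)
  note IHout = less.IH
  show ?case
  proof (induction m rule: less_induct)
    case (less m)
    show ?case
    proof (intro allI impI)
      fix E :: "('f, 'v) eqs" assume n: "card (varsE E) = n" and m: "sizeE E = m" and "\<exists>\<tau>. unifies \<tau> E"
      then obtain \<tau> where \<tau>: "unifies \<tau> E" by auto
      have IHn: "\<And>E' :: ('f, 'v) eqs. card (varsE E') < n \<Longrightarrow> unifies \<tau>' E' \<Longrightarrow> \<exists>\<sigma>. mgu_list \<sigma> E'" for \<tau>'
      proof -
        fix E' :: "('f, 'v) eqs" assume a: "card (varsE E') < n" "unifies \<tau>' E'"
        have "\<forall>E :: ('f, 'v) eqs. card (varsE E) = card (varsE E') \<longrightarrow> sizeE E = sizeE E' \<longrightarrow> (\<exists>\<tau>. unifies \<tau> E) \<longrightarrow> (\<exists>\<sigma>. mgu_list \<sigma> E)"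
          using IHout[OF a(1), of "sizeE E'"] .
        then show "\<exists>\<sigma>. mgu_list \<sigma> E'" using a(2) by blast
      qed
      have IHm: "\<And>E' :: ('f, 'v) eqs. card (varsE E') = n \<Longrightarrow> sizeE E' < m \<Longrightarrow> unifies \<tau>' E' \<Longrightarrow> \<exists>\<sigma>. mgu_list \<sigma> E'" for \<tau>'
        using less.IH[of "sizeE _"] by blast
      have IHle: "\<And>E' :: ('f, 'v) eqs. varsE E' \<subseteq> varsE E \<Longrightarrow> sizeE E' < m \<Longrightarrow> unifies \<tau>' E' \<Longrightarrow> \<exists>\<sigma>. mgu_list \<sigma> E'" for \<tau>'
      proof -
        fix E' :: "('f, 'v) eqs" assume a: "varsE E' \<subseteq> varsE E" "sizeE E' < m" "unifies \<tau>' E'"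
        have "card (varsE E') \<le> n" using card_mono[OF finite_varsE a(1)] n by simp
        then show "\<exists>\<sigma>. mgu_list \<sigma> E'"
          using IHn[OF _ a(3)] IHm[OF _ a(2,3)] by (cases "card (varsE E') < n") auto
      qed
      show "\<exists>\<sigma>. mgu_list \<sigma> E"
      proof (cases E)
        case Nil
        show ?thesis unfolding mgu_list_def unifies_def Nil by (intro exI[of _ Var]) auto
      next
        case (Cons e E0)
        obtain a b where e: "e = (a, b)" by (cases e)
        have ab: "a \<cdot> \<tau> = b \<cdot> \<tau>" and \<tau>0: "unifies \<tau> E0" using \<tau> Cons e unfolding unifies_def by auto
        have var_case: "\<exists>\<sigma>. mgu_list \<sigma> ((Var x, c) # E0)"
          if vx: "Var x \<noteq> c" and ux: "unifies \<tau> ((Var x, c) # E0)"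
          and vs: "varsE ((Var x, c) # E0) = varsE E" for x c
        proof -
          have xc: "\<tau> x = c \<cdot> \<tau>" using ux unfolding unifies_def by auto
          have nx: "x \<notin> vars_term c" using occurs_fail[of x c \<tau>] xc vx by auto
          define \<theta> where "\<theta> = Var(x := c)"
          define E' where "E' = map (\<lambda>(a, b). (a \<cdot> \<theta>, b \<cdot> \<theta>)) E0"
          have \<theta>\<tau>: "\<And>t. t \<cdot> \<theta> \<cdot> \<tau> = t \<cdot> \<tau>" if "\<tau> x = c \<cdot> \<tau>" for \<tau>
            unfolding subst_subst using that by (intro subst_cong) (auto simp: \<theta>_def)
          have uE': "unifies \<tau>' E'" if "unifies \<tau>' ((Var x, c) # E0)" for \<tau>'
          proof -
            have "\<tau>' x = c \<cdot> \<tau>'" using that unfolding unifies_def by auto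
            then show ?thesis using that \<theta>\<tau>[of \<tau>'] unfolding unifies_def E'_def by auto
          qed
          have vE': "varsE E' \<subseteq> varsE E - {x}"
          proof
            fix y assume "y \<in> varsE E'"
            then obtain a b where "(a, b) \<in> set E0" "y \<in> vars_term (a \<cdot> \<theta>) \<union> vars_term (b \<cdot> \<theta>)"
              unfolding varsE_def E'_def by auto
            then show "y \<in> varsE E - {x}" using vs nx
              unfolding vars_subst varsE_def \<theta>_def by (auto split: if_splits)
          qed
          have "card (varsE E') < n"
          proof -
            have "x \<in> varsE E" using vs unfolding varsE_def by auto
            then have "card (varsE E - {x}) < card (varsE E)" by (meson card_Diff1_less finite_varsE)
            moreover have "card (varsE E') \<le> card (varsE E - {x})" using vE' by (simp add: card_mono)
            ultimately show ?thesis using n by simp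
          qed
          then obtain \<sigma>' where \<sigma>': "mgu_list \<sigma>' E'" using IHn uE'[OF ux] by blast
          define \<sigma> where "\<sigma> = (\<lambda>y. \<theta> y \<cdot> \<sigma>')"
          have s\<sigma>: "\<And>t. t \<cdot> \<sigma> = t \<cdot> \<theta> \<cdot> \<sigma>'" unfolding \<sigma>_def subst_subst by simp
          have "unifies \<sigma> ((Var x, c) # E0)"
          proof -
            have "c \<cdot> \<theta> = c" using nx by (auto simp: \<theta>_def intro: trans[OF subst_cong subst_Var])
            then have "Var x \<cdot> \<sigma> = c \<cdot> \<sigma>" unfolding s\<sigma> by (simp add: \<theta>_def)
            moreover have "unifies \<sigma> E0" using \<sigma>' unfolding mgu_list_def unifies_def E'_def s\<sigma> by auto
            ultimately show ?thesis unfolding unifies_def by auto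
          qed
          moreover have "\<exists>\<delta>. \<forall>y. \<tau>' y = \<sigma> y \<cdot> \<delta>" if u: "unifies \<tau>' ((Var x, c) # E0)" for \<tau>'
          proof -
            have xc': "\<tau>' x = c \<cdot> \<tau>'" using that unfolding unifies_def by auto
            obtain \<delta> where \<delta>: "\<forall>y. \<tau>' y = \<sigma>' y \<cdot> \<delta>" using \<sigma>' uE'[OF u] unfolding mgu_list_def by blast
            have "\<tau>' y = \<sigma> y \<cdot> \<delta>" for y
            proof -
              have "\<tau>' y = Var y \<cdot> \<theta> \<cdot> \<tau>'" using \<theta>\<tau>[OF xc', of "Var y"] by simp
              also have "\<dots> = \<theta> y \<cdot> \<tau>'" by simp
              also have "\<dots> = \<theta> y \<cdot> (\<lambda>z. \<sigma>' z \<cdot> \<delta>)" using \<delta> by (metis ext)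
              also have "\<dots> = \<sigma> y \<cdot> \<delta>" unfolding \<sigma>_def subst_subst by simp
              finally show ?thesis .
            qed
            then show ?thesis by blast
          qed
          ultimately show ?thesis unfolding mgu_list_def by blast
        qed
        have swap: "\<exists>\<sigma>. mgu_list \<sigma> ((b, a) # E0) \<Longrightarrow> \<exists>\<sigma>. mgu_list \<sigma> E"
        proof -
          assume "\<exists>\<sigma>. mgu_list \<sigma> ((b, a) # E0)"
          moreover have "unifies \<tau>' ((b, a) # E0) = unifies \<tau>' E" for \<tau>'
            unfolding Cons e unifies_def by auto
          ultimately show ?thesis unfolding mgu_list_def by simp
        qed
        show ?thesis
        proof (cases "a = b")
          case True
          have "varsE E0 \<subseteq> varsE E" "sizeE E0 < m" using m Cons e True unfolding varsE_def by auto
          then obtain \<sigma> where "mgu_list \<sigma> E0" using IHle \<tau>0 by blast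
          then show ?thesis using True Cons e unfolding mgu_list_def unifies_def by auto
        next
          case False
          show ?thesis
          proof (cases a)
            case (Var x)
            then show ?thesis using var_case[of x b] False \<tau> Cons e by auto
          next
            case (Fun f as)
            note fa = Fun
            show ?thesis
            proof (cases b)
              case (Var x)
              have "varsE ((Var x, a) # E0) = varsE E" using Cons e Var unfolding varsE_def by auto
              moreover have "unifies \<tau> ((Var x, a) # E0)" using \<tau> Cons e Var unfolding unifies_def by auto
              ultimately show ?thesis using var_case[of x a] False Var swap by auto
            next
              case (Fun g bs)
              have fg: "f = g" and len: "length as = length bs" and mp: "map (\<lambda>t. t \<cdot> \<tau>) as = map (\<lambda>t. t \<cdot> \<tau>) bs"
                using ab fa Fun by (auto dest: map_eq_imp_length_eq)
              define E' where "E' = zip as bs @ E0"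
              have u: "unifies \<tau>' E' \<longleftrightarrow> unifies \<tau>' E" for \<tau>'
                unfolding E'_def Cons e fa Fun fg using unifies_zip[OF len, of \<tau>'] unfolding unifies_def by auto
              have "varsE E' \<subseteq> varsE E"
                unfolding E'_def Cons e fa Fun varsE_def by (auto dest: set_zip_leftD set_zip_rightD)
              moreover have "sizeE E' < m"
                unfolding E'_def m[symmetric] Cons e fa Fun using sizeE_zip[OF len] by auto
              ultimately obtain \<sigma> where "mgu_list \<sigma> E'" using IHle u \<tau> by blast
              then show ?thesis using u unfolding mgu_list_def by auto
            qed
          qed
        qed
      qed
    qed
  qed
qed

lemma mgu_exists: assumes "s \<cdot> \<tau> = t \<cdot> \<tau>" shows "\<exists>\<sigma>. is_mgu \<sigma> s t"
proof -
  have "unifies \<tau> [(s, t)]" using assms unfolding unifies_def by auto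
  then obtain \<sigma> where "mgu_list \<sigma> [(s, t)]" using mgu_list_exists_aux by blast
  then show ?thesis unfolding mgu_list_def is_mgu_def unifies_def by auto
qed

lemma rename_apart:
  assumes inf: "infinite (UNIV :: 'v set)" and fin: "finite (V1 :: 'v set)" "finite (V2 :: 'v set)"
  shows "\<exists>\<pi>. bij \<pi> \<and> \<pi> ` V1 \<inter> V2 = {}"
proof -
  have "infinite (UNIV - (V1 \<union> V2))" using inf fin by auto
  then obtain F where F: "F \<subseteq> UNIV - (V1 \<union> V2)" "finite F" "card F = card V1"
    using infinite_arbitrarily_large by blast
  obtain g where g: "bij_betw g V1 F" using finite_same_card_bij[OF fin(1) F(2)] F(3) by auto
  define \<pi> where "\<pi> x = (if x \<in> V1 then g x else if x \<in> F then inv_into V1 g x else x)" for x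
  have FV1: "F \<inter> V1 = {}" using F by auto
  have inv: "\<pi> (\<pi> x) = x" for x
  proof (cases "x \<in> V1")
    case True
    then have "g x \<in> F" using g by (auto simp: bij_betw_def)
    then have "g x \<notin> V1" using FV1 by auto
    then show ?thesis using True \<open>g x \<in> F\<close> g by (simp add: \<pi>_def bij_betw_def)
  next
    case False
    show ?thesis
    proof (cases "x \<in> F")
      case True
      have "inv_into V1 g x \<in> V1" using True g by (metis bij_betw_def inv_into_into)
      moreover have "g (inv_into V1 g x) = x" using True g by (meson bij_betw_inv_into_right)
      ultimately show ?thesis using False True by (simp add: \<pi>_def)
    next
      case False2: False
      then show ?thesis using False by (simp add: \<pi>_def)
    qed
  qed
  have "bij \<pi>" unfolding bij_def inj_def surj_def using inv by metis
  moreover have "\<pi> ` V1 \<inter> V2 = {}"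
  proof -
    have "\<pi> ` V1 \<subseteq> F" using g unfolding \<pi>_def bij_betw_def by auto
    then show ?thesis using F by auto
  qed
  ultimately show ?thesis by blast
qed

lemma vars_rename: "vars_term (t \<cdot> (Var \<circ> \<pi>)) = \<pi> ` vars_term t"
  by (induction t) auto

lemma subst_eq_vars: "t \<cdot> \<sigma> = t \<cdot> \<tau> \<Longrightarrow> x \<in> vars_term t \<Longrightarrow> \<sigma> x = \<tau> x"
  by (induction t) auto

lemma rstep_NF_subst: "\<not> NF S t \<Longrightarrow> \<not> NF S (t \<cdot> \<delta>)"
  unfolding NF_def using rstep_subst by blast

section \<open>Critical pair instances\<close>

lemma cp_instance:
  fixes l1 r1 l2 r2 :: "('f, 'v) term"
  assumes inf: "infinite (UNIV :: 'v set)"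
    and X1vars: "\<forall>(l, r) \<in> X1. vars_term r \<subseteq> vars_term l"
    and rule1: "(l1, r1) \<in> X1" and rule2: "(l2, r2) \<in> X2"
    and q: "q \<in> fun_poss l2"
    and eq: "subt_at (l2 \<cdot> \<sigma>2) q = l1 \<cdot> \<sigma>1"
    and prime: "\<forall>q' \<in> poss (l1 \<cdot> \<sigma>1). q' \<noteq> [] \<longrightarrow> NF S (subt_at (l1 \<cdot> \<sigma>1) q')"
  shows "replace_at (l2 \<cdot> \<sigma>2) q (r1 \<cdot> \<sigma>1) = r2 \<cdot> \<sigma>2 \<or>
    (\<exists>c1 c2 \<delta>. (c1, c2) \<in> pcp X1 X2 S \<and> replace_at (l2 \<cdot> \<sigma>2) q (r1 \<cdot> \<sigma>1) = c1 \<cdot> \<delta> \<and> r2 \<cdot> \<sigma>2 = c2 \<cdot> \<delta>)"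
    (is "?A \<or> ?B")
proof -
  obtain \<pi> :: "'v \<Rightarrow> 'v" where \<pi>: "bij \<pi>" "\<pi> ` vars_rule (l1, r1) \<inter> vars_rule (l2, r2) = {}"
    using rename_apart[OF inf, of "vars_rule (l1, r1)" "vars_rule (l2, r2)"] unfolding vars_rule_def by auto
  define l1' where "l1' = l1 \<cdot> (Var \<circ> \<pi>)"
  define r1' where "r1' = r1 \<cdot> (Var \<circ> \<pi>)"
  define \<sigma>1' where "\<sigma>1' x = \<sigma>1 (inv \<pi> x)" for x
  have ren: "t \<cdot> (Var \<circ> \<pi>) \<cdot> \<sigma>1' = t \<cdot> \<sigma>1" for t
    unfolding subst_subst \<sigma>1'_def using \<pi>(1) by (simp add: bij_is_inj)
  have vr: "vars_rule (l1', r1') = \<pi> ` vars_rule (l1, r1)"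
    unfolding vars_rule_def l1'_def r1'_def by (simp add: vars_rename image_Un)
  have disj: "vars_rule (l1', r1') \<inter> vars_rule (l2, r2) = {}" using vr \<pi>(2) by simp
  define \<tau> where "\<tau> x = (if x \<in> vars_rule (l1', r1') then \<sigma>1' x else \<sigma>2 x)" for x
  have l1\<tau>: "l1' \<cdot> \<tau> = l1 \<cdot> \<sigma>1"
    using ren[of l1] unfolding l1'_def[symmetric] by (metis (no_types, lifting) UnCI \<tau>_def subst_cong vars_rule_def fst_conv)
  have r1\<tau>: "r1' \<cdot> \<tau> = r1 \<cdot> \<sigma>1"
    using ren[of r1] unfolding r1'_def[symmetric] by (metis (no_types, lifting) UnCI \<tau>_def subst_cong vars_rule_def snd_conv)
  have l2\<tau>: "l2 \<cdot> \<tau> = l2 \<cdot> \<sigma>2"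
    using disj by (intro subst_cong) (auto simp: \<tau>_def vars_rule_def)
  have r2\<tau>: "r2 \<cdot> \<tau> = r2 \<cdot> \<sigma>2"
    using disj by (intro subst_cong) (auto simp: \<tau>_def vars_rule_def)
  have qp: "q \<in> poss l2" using q unfolding fun_poss_def by auto
  have unif: "l1' \<cdot> \<tau> = subt_at l2 q \<cdot> \<tau>"
    using l1\<tau> eq subt_at_subst[OF qp, of \<tau>] l2\<tau> by simp
  obtain \<sigma> where mgu: "is_mgu \<sigma> l1' (subt_at l2 q)" using mgu_exists[OF unif] by auto
  then obtain \<delta> where \<delta>: "\<forall>x. \<tau> x = \<sigma> x \<cdot> \<delta>" using unif unfolding is_mgu_def by blast
  have \<tau>\<delta>: "t \<cdot> \<tau> = t \<cdot> \<sigma> \<cdot> \<delta>" for t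
    unfolding subst_subst using \<delta> by (intro subst_cong) auto
  have var1: "is_variant (l1, r1) (l1', r1')" unfolding is_variant_def l1'_def r1'_def using \<pi>(1) by auto
  have var2: "is_variant (l2, r2) (l2, r2)" unfolding is_variant_def by (intro exI[of _ id]) auto
  show ?thesis
  proof (cases "q = [] \<and> is_variant (l1', r1') (l2, r2)")
    case True
    then obtain \<rho> where \<rho>: "l2 = l1' \<cdot> (Var \<circ> \<rho>)" "r2 = r1' \<cdot> (Var \<circ> \<rho>)"
      unfolding is_variant_def by auto
    have "l1' \<cdot> \<tau> = l1' \<cdot> (\<lambda>x. \<sigma>2 (\<rho> x))"
      using l1\<tau> eq True \<rho>(1) by (simp add: subst_subst)
    moreover have "vars_term r1' \<subseteq> vars_term l1'"
    proof -
      have "vars_term r1 \<subseteq> vars_term l1" using X1vars rule1 by auto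
      then show ?thesis unfolding l1'_def r1'_def vars_rename by (rule image_mono)
    qed
    ultimately have "r1' \<cdot> \<tau> = r1' \<cdot> (\<lambda>x. \<sigma>2 (\<rho> x))"
      by (intro subst_cong) (auto dest: subst_eq_vars)
    then have "?A" using r1\<tau> True \<rho>(2) by (simp add: subst_subst)
    then show ?thesis ..
  next
    case False
    define c1 where "c1 = replace_at (l2 \<cdot> \<sigma>) q (r1' \<cdot> \<sigma>)"
    define c2 where "c2 = r2 \<cdot> \<sigma>"
    have qp\<sigma>: "q \<in> poss (l2 \<cdot> \<sigma>)" using poss_subst[OF qp] .
    have i1: "replace_at (l2 \<cdot> \<sigma>2) q (r1 \<cdot> \<sigma>1) = c1 \<cdot> \<delta>"
      unfolding c1_def replace_at_subst[OF qp\<sigma>, symmetric] using \<tau>\<delta>[of l2] \<tau>\<delta>[of r1'] l2\<tau> r1\<tau> by simp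
    have i2: "r2 \<cdot> \<sigma>2 = c2 \<cdot> \<delta>" unfolding c2_def using \<tau>\<delta>[of r2] r2\<tau> by simp
    have pr: "prime_redex S (subt_at (l2 \<cdot> \<sigma>) q)"
      unfolding prime_redex_def
    proof (intro ballI impI)
      fix q' assume q': "q' \<in> poss (subt_at (l2 \<cdot> \<sigma>) q)" "q' \<noteq> []"
      define w where "w = subt_at (l2 \<cdot> \<sigma>) q"
      have w\<delta>: "w \<cdot> \<delta> = l1 \<cdot> \<sigma>1"
        unfolding w_def subt_at_subst[OF qp\<sigma>, symmetric] using \<tau>\<delta>[of l2] l2\<tau> eq by simp
      have "q' \<in> poss (l1 \<cdot> \<sigma>1)" using poss_subst[OF q'(1)[folded w_def], of \<delta>] w\<delta> by simp
      then have "NF S (subt_at (l1 \<cdot> \<sigma>1) q')" using prime q'(2) by auto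
      moreover have "subt_at (l1 \<cdot> \<sigma>1) q' = subt_at w q' \<cdot> \<delta>"
        using subt_at_subst[OF q'(1)[folded w_def], of \<delta>] w\<delta> by simp
      ultimately show "NF S (subt_at (subt_at (l2 \<cdot> \<sigma>) q) q')"
        using rstep_NF_subst unfolding w_def by metis
    qed
    have "(c1, c2) \<in> pcp X1 X2 S"
      unfolding pcp_def c1_def c2_def
      apply (rule CollectI)
      apply (rule exI[of _ l1'], rule exI[of _ r1'], rule exI[of _ q], rule exI[of _ l2], rule exI[of _ r2], rule exI[of _ \<sigma>])
      using var1 var2 rule1 rule2 disj q False mgu pr unfolding variant_of_def by auto
    then show ?thesis using i1 i2 by blast
  qed
qed

lemma size_subt_at: "p \<in> poss t \<Longrightarrow> size (subt_at t p) \<le> size t \<and> (p \<noteq> [] \<longrightarrow> size (subt_at t p) < size t)"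
proof (induction t p rule: subt_at.induct)
  case (2 f ts i p)
  then have i: "i < length ts" "p \<in> poss (ts ! i)" by auto
  with 2 have "size (subt_at (ts ! i) p) \<le> size (ts ! i)" by auto
  moreover have "size (ts ! i) < size (Fun f ts)" using i by (intro size_Fun_arg) auto
  ultimately show ?case by auto
qed auto

lemma size_subt_at_append: "p @ q \<in> poss t \<Longrightarrow> q \<noteq> [] \<Longrightarrow> size (subt_at t (p @ q)) < size (subt_at t p)"
  using size_subt_at[of q "subt_at t p"] by auto

lemma size_subt_at_append_le: "p @ q \<in> poss t \<Longrightarrow> size (subt_at t (p @ q)) \<le> size (subt_at t p)"
  using size_subt_at[of q "subt_at t p"] by auto

lemma pos_var: "q \<in> poss t \<Longrightarrow> subt_at t q = Var x \<Longrightarrow> x \<in> vars_term t"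
proof (induction t q rule: subt_at.induct)
  case (2 f ts i p) then show ?case by (auto intro!: bexI[of _ "ts ! i"])
qed auto

lemma linear_replace:
  assumes "linear_term l" "q \<in> poss l" "subt_at l q = Var x"
  shows "replace_at (l \<cdot> \<sigma>) q w = l \<cdot> (\<sigma>(x := w))"
  using assms
proof (induction l arbitrary: q)
  case (Var y) then show ?case by (cases q) auto
next
  case (Fun f ts)
  show ?case
  proof (cases q)
    case Nil then show ?thesis using Fun by simp
  next
    case (Cons i q')
    have i: "i < length ts" "q' \<in> poss (ts ! i)" "subt_at (ts ! i) q' = Var x"
      using Fun.prems Cons by auto
    have lin: "linear_term (ts ! i)" using Fun.prems(1) i by auto
    have IH: "replace_at (ts ! i \<cdot> \<sigma>) q' w = ts ! i \<cdot> \<sigma>(x := w)"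
      using Fun.IH[of "ts ! i" q'] lin i by (auto simp: fun_upd_def)
    have xi: "x \<in> vars_term (ts ! i)" using pos_var i(2,3) .
    have other: "ts ! j \<cdot> \<sigma> = ts ! j \<cdot> \<sigma>(x := w)" if "j < length ts" "j \<noteq> i" for j
    proof -
      have "vars_term (ts ! i) \<inter> vars_term (ts ! j) = {}"
      proof (cases "i < j")
        case True then show ?thesis using Fun.prems(1) that by auto
      next
        case False
        then have "j < i" using that by auto
        then have "vars_term (ts ! j) \<inter> vars_term (ts ! i) = {}" using Fun.prems(1) i(1) by auto
        then show ?thesis by blast
      qed
      then have "x \<notin> vars_term (ts ! j)" using xi by auto
      then show ?thesis by (intro subst_cong) auto
    qed
    show ?thesis unfolding Cons using i IH other
      by (auto intro!: nth_equalityI simp: nth_list_update fun_upd_def)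
  qed
qed

lemma rsteps_replace: "(a, b) \<in> (rstep Y)\<^sup>* \<Longrightarrow> p \<in> poss u \<Longrightarrow> (replace_at u p a, replace_at u p b) \<in> (rstep Y)\<^sup>*"
  by (erule rtrancl_map) (rule rstep_replace)

lemma rsteps_subst: "(a, b) \<in> (rstep Y)\<^sup>* \<Longrightarrow> (a \<cdot> \<sigma>, b \<cdot> \<sigma>) \<in> (rstep Y)\<^sup>*"
  by (erule rtrancl_map) (rule rstep_subst)

lemma args_rsteps:
  "length ts = length ss \<Longrightarrow> (\<forall>i < length ts. (ts ! i, ss ! i) \<in> (rstep Y)\<^sup>*) \<Longrightarrow>
    (Fun f (us @ ts), Fun f (us @ ss)) \<in> (rstep Y)\<^sup>*"
proof (induction ts ss arbitrary: us rule: list_induct2)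
  case Nil then show ?case by simp
next
  case (Cons t ts s ss)
  have "(t, s) \<in> (rstep Y)\<^sup>*" using Cons.prems by force
  from rsteps_replace[OF this, of "[length us]" "Fun f (us @ t # ts)"]
  have "(Fun f (us @ t # ts), Fun f (us @ s # ts)) \<in> (rstep Y)\<^sup>*" by simp
  moreover have "(Fun f ((us @ [s]) @ ts), Fun f ((us @ [s]) @ ss)) \<in> (rstep Y)\<^sup>*"
  proof (rule Cons.IH, intro allI impI)
    fix i assume "i < length ts"
    then show "(ts ! i, ss ! i) \<in> (rstep Y)\<^sup>*" using Cons.prems[rule_format, of "Suc i"] by simp
  qed
  ultimately show ?case by simp
qed

lemma args_rsteps': "length ts = length ss \<Longrightarrow> (\<forall>i < length ts. (ts ! i, ss ! i) \<in> (rstep Y)\<^sup>*) \<Longrightarrow>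
    (Fun f ts, Fun f ss) \<in> (rstep Y)\<^sup>*"
  using args_rsteps[of ts ss Y f "[]"] by simp

lemma rsteps_subst_var:
  assumes "(\<sigma> x, s') \<in> rstep Y"
  shows "(t \<cdot> \<sigma>, t \<cdot> \<sigma>(x := s')) \<in> (rstep Y)\<^sup>*"
proof (induction t)
  case (Var y) then show ?case using assms by auto
next
  case (Fun f ts) then show ?case by (auto intro!: args_rsteps')
qed

lemma rsteps_subst_var_plus:
  assumes "(\<sigma> x, s') \<in> rstep Y" "x \<in> vars_term t" "\<sigma> x \<noteq> s'"
  shows "(t \<cdot> \<sigma>, t \<cdot> \<sigma>(x := s')) \<in> (rstep Y)\<^sup>+"
proof -
  have "t \<cdot> \<sigma> \<noteq> t \<cdot> \<sigma>(x := s')" using subst_eq_vars[of t \<sigma> "\<sigma>(x := s')" x] assms(2,3) by auto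
  then show ?thesis using rsteps_subst_var[of \<sigma> x s' Y t, OF assms(1)] by (simp add: rtrancl_eq_or_trancl)
qed

lemma nonlinear_replace:
  assumes "q \<in> poss l" "subt_at l q = Var x" "(\<sigma> x, s') \<in> rstep Y"
  shows "(replace_at (l \<cdot> \<sigma>) q s', l \<cdot> \<sigma>(x := s')) \<in> (rstep Y)\<^sup>*"
  using assms
proof (induction l arbitrary: q)
  case (Var y) then show ?case by (cases q) auto
next
  case (Fun f ts)
  show ?case
  proof (cases q)
    case Nil then show ?thesis using Fun by simp
  next
    case (Cons i q')
    have i: "i < length ts" "q' \<in> poss (ts ! i)" "subt_at (ts ! i) q' = Var x"
      using Fun.prems Cons by auto
    have IH: "(replace_at (ts ! i \<cdot> \<sigma>) q' s', ts ! i \<cdot> \<sigma>(x := s')) \<in> (rstep Y)\<^sup>*"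
      using Fun.IH[of "ts ! i" q'] i Fun.prems(3) by (auto simp: fun_upd_def)
    show ?thesis unfolding Cons using i IH rsteps_subst_var[of \<sigma> x s' Y, OF Fun.prems(3)]
      by (auto intro!: args_rsteps' simp: nth_list_update fun_upd_def)
  qed
qed

section \<open>Conversions below a term\<close>

context cmod begin

definition Below where "Below u = {w. (u, w) \<in> gt}"

definition CB where "CB R u = (rel_on (Below u) (sym_step (R \<union> B)))\<^sup>*"

lemma CB_sym: "(a, b) \<in> CB R u \<Longrightarrow> (b, a) \<in> CB R u"
  unfolding CB_def using rel_on_converse sym_step_conv by metis

lemma CB_trans: "(a, b) \<in> CB R u \<Longrightarrow> (b, c) \<in> CB R u \<Longrightarrow> (a, c) \<in> CB R u"
  unfolding CB_def by simp

lemma OkConv_CB: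
  assumes "OkConv R a b" "(u, a) \<in> gt" "(u, b) \<in> gt"
  shows "(a, b) \<in> CB R u"
proof -
  have "Ok a b \<subseteq> Below u"
    unfolding Ok_def Below_def using assms(2,3) gt_trans gt_sim sim_sym by blast
  then show ?thesis using assms(1) rel_on_mono unfolding OkConv_def CB_def by blast
qed

lemma OkConv_path:
  assumes ok: "OkConv R v t" and uv: "(u, v) \<in> sim" and ut: "(u, t) \<in> gt" and Rgt: "R \<subseteq> gt"
  shows "\<exists>c. (v, c) \<in> rstep R \<and> (c, t) \<in> CB R u"
proof -
  let ?S = "sym_step (R \<union> B)"
  have OkB: "Ok v t \<subseteq> {v} \<union> Below u"
  proof
    fix w assume "w \<in> Ok v t"
    then consider "w = v" | "w = t" | "(v, w) \<in> gt" | "(t, w) \<in> gt" | "(w, v) \<in> sim" "(w, t) \<in> sim"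
      unfolding Ok_def by auto
    then show "w \<in> {v} \<union> Below u"
    proof cases
      case 5
      then have "(u, t) \<in> sim" using uv sim_trans sim_sym by blast
      then show ?thesis using ut gt_not_sim by blast
    qed (use ut uv gt_trans sim_gt in \<open>auto simp: Below_def\<close>)
  qed
  have tB: "t \<in> Below u" using ut by (simp add: Below_def)
  have vnB: "v \<notin> Below u" using uv gt_not_sim sim_sym sim_gt gt_irrefl unfolding Below_def by blast
  have main: "(x, t) \<in> (rel_on ({v} \<union> Below u) ?S)\<^sup>* \<Longrightarrow>
    (x = v \<longrightarrow> (\<exists>c. (v, c) \<in> rstep R \<and> (c, t) \<in> CB R u)) \<and>
    (x \<in> Below u \<longrightarrow> (x, t) \<in> CB R u \<or> (\<exists>c. (v, c) \<in> rstep R \<and> (c, t) \<in> CB R u))" for x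
  proof (induction rule: converse_rtrancl_induct)
    case base
    then show ?case using tB vnB unfolding CB_def by auto
  next
    case (step x y)
    from step(1) have xy: "(x, y) \<in> ?S" "x \<in> {v} \<union> Below u" "y \<in> {v} \<union> Below u"
      unfolding rel_on_def by auto
    show ?case
    proof (intro conjI impI)
      assume xv: "x = v"
      show "\<exists>c. (v, c) \<in> rstep R \<and> (c, t) \<in> CB R u"
      proof (cases "y = v")
        case True then show ?thesis using step(3) by auto
      next
        case False
        then have yB: "y \<in> Below u" using xy by auto
        have "(v, y) \<in> rstep R"
        proof -
          have "(v, y) \<in> rstep R \<union> (rstep R)\<inverse> \<union> rstep B \<union> (rstep B)\<inverse>"
            using xy xv unfolding sym_step_def rstep_union by auto
          moreover have "(y, v) \<notin> rstep R"
            using rstep_gt[OF Rgt] yB vnB gt_trans unfolding Below_def by blast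
          moreover have "(v, y) \<notin> rstep B \<union> (rstep B)\<inverse>"
          proof
            assume "(v, y) \<in> rstep B \<union> (rstep B)\<inverse>"
            then have "(v, y) \<in> sim" unfolding simB_def conv_def sym_step_def by auto
            then have "(u, y) \<in> sim" using uv sim_trans by blast
            then show False using yB gt_not_sim unfolding Below_def by blast
          qed
          ultimately show ?thesis by blast
        qed
        moreover have "(y, t) \<in> CB R u \<or> (\<exists>c. (v, c) \<in> rstep R \<and> (c, t) \<in> CB R u)" using step(3) yB by auto
        ultimately show ?thesis by blast
      qed
    next
      assume xB: "x \<in> Below u"
      show "(x, t) \<in> CB R u \<or> (\<exists>c. (v, c) \<in> rstep R \<and> (c, t) \<in> CB R u)"
      proof (cases "y = v")
        case True then show ?thesis using step(3) by auto
      next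
        case False
        then have yB: "y \<in> Below u" using xy by auto
        have "(x, y) \<in> CB R u" using xy xB yB unfolding CB_def rel_on_def by auto
        then show ?thesis using step(3) yB CB_trans by blast
      qed
    qed
  qed
  have "(v, t) \<in> (rel_on ({v} \<union> Below u) ?S)\<^sup>*"
    using ok OkB rel_on_mono unfolding OkConv_def by blast
  then show ?thesis using main by blast
qed

end

lemma par_peak:
  assumes "i \<noteq> j" "p1 = r @ i # p" "p2 = r @ j # q" "p1 \<in> poss u" "p2 \<in> poss u"
    "subt_at u p1 = l1 \<cdot> \<sigma>1" "(l1, r1) \<in> X1" "subt_at u p2 = l2 \<cdot> \<sigma>2" "(l2, r2) \<in> X2"
  shows "\<exists>c. (replace_at u p1 (r1 \<cdot> \<sigma>1), c) \<in> rstep X2 \<and> (replace_at u p2 (r2 \<cdot> \<sigma>2), c) \<in> rstep X1"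
proof -
  let ?t = "replace_at u p1 (r1 \<cdot> \<sigma>1)" and ?v = "replace_at u p2 (r2 \<cdot> \<sigma>2)"
  let ?c = "replace_at ?t p2 (r2 \<cdot> \<sigma>2)"
  have 1: "(?t, ?c) \<in> rstep X2"
    using assms parallel_subt_replace[where i=i and j=j and r=r and p=p and t=u and s="r1 \<cdot> \<sigma>1" and q=q]
    by (intro rstepI[of l2 r2 X2 p2 _ \<sigma>2]) auto
  have e: "?c = replace_at ?v p1 (r1 \<cdot> \<sigma>1)"
    using assms parallel_replace_comm[where i=i and j=j and r=r and p=p and t=u and q=q and s="r1 \<cdot> \<sigma>1" and s'="r2 \<cdot> \<sigma>2"] by simp
  have 2: "(?v, ?c) \<in> rstep X1"
    unfolding e using assms parallel_subt_replace[where i=j and j=i and r=r and p=q and t=u and s="r2 \<cdot> \<sigma>2" and q=p]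
    by (intro rstepI[of l1 r1 X1 p1 _ \<sigma>1]) auto
  show ?thesis using 1 2 by blast
qed

lemma var_peak:
  assumes "p1 @ q1 @ q2 \<in> poss u" "subt_at u p1 = l1 \<cdot> \<sigma>1" "q1 \<in> poss l1" "subt_at l1 q1 = Var x"
    "subt_at u (p1 @ q1 @ q2) = l2 \<cdot> \<sigma>2" "(l2, r2) \<in> X2"
  shows "\<exists>s'. (\<sigma>1 x, s') \<in> rstep X2 \<and>
     replace_at u (p1 @ q1 @ q2) (r2 \<cdot> \<sigma>2) = replace_at u p1 (replace_at (l1 \<cdot> \<sigma>1) q1 s')"
proof -
  have p1: "p1 \<in> poss u" and q12: "q1 @ q2 \<in> poss (l1 \<cdot> \<sigma>1)" using assms(1,2) by auto
  have q1: "q1 \<in> poss (l1 \<cdot> \<sigma>1)" using q12 by simp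
  have sx: "subt_at (l1 \<cdot> \<sigma>1) q1 = \<sigma>1 x" using subt_at_subst[OF assms(3)] assms(4) by simp
  have q2: "q2 \<in> poss (\<sigma>1 x)" using q12 sx by simp
  define s' where "s' = replace_at (\<sigma>1 x) q2 (r2 \<cdot> \<sigma>2)"
  have "subt_at (\<sigma>1 x) q2 = l2 \<cdot> \<sigma>2" using assms(2,5) sx by simp
  then have "(\<sigma>1 x, s') \<in> rstep X2" unfolding s'_def using q2 assms(6) by (intro rstepI) auto
  moreover have "replace_at u (p1 @ q1 @ q2) (r2 \<cdot> \<sigma>2) = replace_at u p1 (replace_at (l1 \<cdot> \<sigma>1) q1 s')"
    using replace_at_append[OF p1, of "q1 @ q2"] replace_at_append[OF q1, of q2] assms(2) sx
    unfolding s'_def by simp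
  ultimately show ?thesis by blast
qed

lemma nonprime_step:
  assumes "p \<in> poss u" "subt_at u p = w" "q' \<in> poss w" "q' \<noteq> []" "\<not> NF R (subt_at w q')"
  obtains p3 l3 r3 \<sigma>3 where "p3 \<in> poss u" "subt_at u p3 = l3 \<cdot> \<sigma>3" "(l3, r3) \<in> R"
    "size (subt_at u p3) < size (subt_at u p)" "\<exists>q3. p3 = p @ q3"
proof -
  obtain z where "(subt_at w q', z) \<in> rstep R" using assms(5) unfolding NF_def by auto
  then obtain l3 r3 q'' \<sigma>3 where r3: "(l3, r3) \<in> R" "q'' \<in> poss (subt_at w q')" "subt_at (subt_at w q') q'' = l3 \<cdot> \<sigma>3"
    by (rule rstepE) auto
  let ?p3 = "p @ q' @ q''"
  have "?p3 \<in> poss u" using assms r3 by simp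
  moreover have "subt_at u ?p3 = l3 \<cdot> \<sigma>3" using assms r3 by simp
  moreover have "size (subt_at u ?p3) < size (subt_at u p)"
    using size_subt_at_append[of p "q' @ q''" u] assms \<open>?p3 \<in> poss u\<close> by simp
  ultimately show ?thesis using that r3(1) by blast
qed

section \<open>Local peak analysis\<close>

locale peak = cmod gt B for gt B :: "('f, 'v) trs" +
  fixes R :: "('f, 'v) trs"
  assumes inf: "infinite (UNIV :: 'v set)"
    and Bv: "\<forall>(l, r) \<in> B. vars_term l = vars_term r"
    and Rgt: "R \<subseteq> gt"
    and ll: "left_linear R"
    and fairCP: "\<forall>(c1, c2) \<in> PCP R \<union> PCP_pm R (Bpm B). OkConv R c1 c2"
begin

lemma Rvars: "\<forall>(l, r) \<in> R. vars_term r \<subseteq> vars_term l"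
  using Rgt gt_vars by auto

lemma BBvars: "(l, r) \<in> Bpm B \<Longrightarrow> vars_term l = vars_term r"
  using Bv unfolding Bpm_def by auto

lemma BBvars': "\<forall>(l, r) \<in> Bpm B. vars_term r \<subseteq> vars_term l"
  using BBvars by auto

lemma Rlin: "(l, r) \<in> R \<Longrightarrow> linear_term l"
  using ll unfolding left_linear_def by auto

lemma rstepR_gt: "(s, t) \<in> rstep R \<Longrightarrow> (s, t) \<in> gt"
  using rstep_gt[OF Rgt] .

lemma BB_sim: "(s, t) \<in> rstep (Bpm B) \<Longrightarrow> (s, t) \<in> sim"
  unfolding sym_step_Bpm[symmetric] simB_def conv_def by auto

lemma BBs_sim: "(s, t) \<in> (rstep (Bpm B))\<^sup>* \<Longrightarrow> (s, t) \<in> sim"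
proof (induction rule: rtrancl_induct)
  case base then show ?case by (simp add: simB_def)
next
  case (step y z) then show ?case using BB_sim sim_trans by blast
qed

lemma crit:
  assumes X1v: "\<forall>(l, r) \<in> X1. vars_term r \<subseteq> vars_term l"
    and fair: "\<forall>(c1, c2) \<in> pcp X1 X2 R. OkConv R c1 c2"
    and r1: "(l1, r1) \<in> X1" and r2: "(l2, r2) \<in> X2"
    and P: "P \<in> poss u" "subt_at u P = l2 \<cdot> \<sigma>2"
    and q: "q \<in> fun_poss l2" and eq: "subt_at (l2 \<cdot> \<sigma>2) q = l1 \<cdot> \<sigma>1"
    and prime: "\<forall>q' \<in> poss (l1 \<cdot> \<sigma>1). q' \<noteq> [] \<longrightarrow> NF R (subt_at (l1 \<cdot> \<sigma>1) q')"
  shows "OkConv R (replace_at u (P @ q) (r1 \<cdot> \<sigma>1)) (replace_at u P (r2 \<cdot> \<sigma>2))"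
proof -
  have e: "replace_at u (P @ q) (r1 \<cdot> \<sigma>1) = replace_at u P (replace_at (l2 \<cdot> \<sigma>2) q (r1 \<cdot> \<sigma>1))"
    using replace_at_append[OF P(1)] P(2) by simp
  from cp_instance[OF inf X1v r1 r2 q eq prime]
  consider "replace_at (l2 \<cdot> \<sigma>2) q (r1 \<cdot> \<sigma>1) = r2 \<cdot> \<sigma>2"
    | c1 c2 \<delta> where "(c1, c2) \<in> pcp X1 X2 R" "replace_at (l2 \<cdot> \<sigma>2) q (r1 \<cdot> \<sigma>1) = c1 \<cdot> \<delta>" "r2 \<cdot> \<sigma>2 = c2 \<cdot> \<delta>"
    by blast
  then show ?thesis
  proof cases
    case 1 then show ?thesis unfolding e by (simp add: OkConv_refl)
  next
    case 2
    have "OkConv R c1 c2" using fair 2(1) by auto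
    from OkConv_replace[OF OkConv_subst[OF this, of \<delta>] P(1)] show ?thesis unfolding e 2(2,3) .
  qed
qed

lemma fair_RR: "\<forall>(c1, c2) \<in> pcp R R R. OkConv R c1 c2"
  using fairCP unfolding PCP_def by auto

lemma fair_RB: "\<forall>(c1, c2) \<in> pcp R (Bpm B) R. OkConv R c1 c2"
  using fairCP unfolding PCP_pm_def by auto

lemma fair_BR: "\<forall>(c1, c2) \<in> pcp (Bpm B) R R. OkConv R c1 c2"
  using fairCP unfolding PCP_pm_def by auto

lemma join_CB:
  assumes "(a, b) \<in> join_mod B R" "(u, a) \<in> gt" "(u, b) \<in> gt"
  shows "(a, b) \<in> CB R u"
  using OkConv_CB[OF OkConv_join[OF Rgt assms(1)] assms(2,3)] .

lemma joinI: "(a, c) \<in> (rstep R)\<^sup>* \<Longrightarrow> (c, d) \<in> sim \<Longrightarrow> (b, d) \<in> (rstep R)\<^sup>* \<Longrightarrow> (a, b) \<in> join_mod B R"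
  unfolding join_mod_def by (auto simp: rtrancl_converse)

lemma sim_refl: "(a, a) \<in> sim" unfolding simB_def by simp

lemma alpha_aux:
  "\<forall>u p1 l1 r1 \<sigma>1 p2 l2 r2 \<sigma>2. (l1, r1) \<in> R \<longrightarrow> (l2, r2) \<in> R \<longrightarrow> p1 \<in> poss u \<longrightarrow> p2 \<in> poss u \<longrightarrow>
    subt_at u p1 = l1 \<cdot> \<sigma>1 \<longrightarrow> subt_at u p2 = l2 \<cdot> \<sigma>2 \<longrightarrow>
    min (size (subt_at u p1)) (size (subt_at u p2)) = n \<longrightarrow>
    (replace_at u p1 (r1 \<cdot> \<sigma>1), replace_at u p2 (r2 \<cdot> \<sigma>2)) \<in> CB R u"
proof (induction n rule: less_induct)
  case (less n)
  have nested: "(replace_at u p1 (r1 \<cdot> \<sigma>1), replace_at u p2 (r2 \<cdot> \<sigma>2)) \<in> CB R u"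
    if rl: "(l1, r1) \<in> R" "(l2, r2) \<in> R" and ps: "p1 \<in> poss u" "p2 \<in> poss u"
      and s1: "subt_at u p1 = l1 \<cdot> \<sigma>1" and s2: "subt_at u p2 = l2 \<cdot> \<sigma>2"
      and mn: "min (size (subt_at u p1)) (size (subt_at u p2)) = n"
      and pq: "p2 = p1 @ q"
    for u p1 l1 r1 \<sigma>1 p2 l2 r2 \<sigma>2 q
  proof -
    let ?t = "replace_at u p1 (r1 \<cdot> \<sigma>1)" and ?v = "replace_at u p2 (r2 \<cdot> \<sigma>2)"
    have ut: "(u, ?t) \<in> gt" using rstepR_gt rstepI[OF rl(1) ps(1) s1] by blast
    have uv: "(u, ?v) \<in> gt" using rstepR_gt rstepI[OF rl(2) ps(2) s2] by blast
    have qp: "q \<in> poss (l1 \<cdot> \<sigma>1)" using ps(2) pq s1 by simp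
    have n: "n = size (subt_at u p2)" using mn size_subt_at_append_le[of p1 q u] ps pq by auto
    from qp show ?thesis
    proof (cases rule: poss_subst_cases)
      case funpos
      then have qf: "q \<in> fun_poss l1" unfolding fun_poss_def by auto
      have eq: "subt_at (l1 \<cdot> \<sigma>1) q = l2 \<cdot> \<sigma>2" using s1 s2 pq by simp
      show ?thesis
      proof (cases "\<forall>q' \<in> poss (l2 \<cdot> \<sigma>2). q' \<noteq> [] \<longrightarrow> NF R (subt_at (l2 \<cdot> \<sigma>2) q')")
        case True
        from crit[OF Rvars fair_RR rl(2) rl(1) ps(1) s1 qf eq True]
        have "OkConv R ?v ?t" using pq by simp
        then show ?thesis using OkConv_CB[OF OkConv_sym] uv ut by blast
      next
        case False
        then obtain q' where q': "q' \<in> poss (l2 \<cdot> \<sigma>2)" "q' \<noteq> []" "\<not> NF R (subt_at (l2 \<cdot> \<sigma>2) q')" by auto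
        obtain p3 l3 r3 \<sigma>3 where p3: "p3 \<in> poss u" "subt_at u p3 = l3 \<cdot> \<sigma>3" "(l3, r3) \<in> R"
          "size (subt_at u p3) < size (subt_at u p2)"
          using nonprime_step[OF ps(2) s2 q'] by metis
        let ?w = "replace_at u p3 (r3 \<cdot> \<sigma>3)"
        have "min (size (subt_at u p1)) (size (subt_at u p3)) < n" using p3(4) n by simp
        then have A: "(?t, ?w) \<in> CB R u" using less.IH rl(1) p3 ps(1) s1 by blast
        have "min (size (subt_at u p2)) (size (subt_at u p3)) < n" using p3(4) n by simp
        then have Bc: "(?v, ?w) \<in> CB R u" using less.IH rl(2) p3 ps(2) s2 by blast
        show ?thesis using CB_trans[OF A CB_sym[OF Bc]] .
      qed
    next
      case (var q1 q2 x)
      from var_peak[of p1 q1 q2 u l1 \<sigma>1 x l2 \<sigma>2 r2 R] var ps pq s1 s2 rl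
      obtain s' where s': "(\<sigma>1 x, s') \<in> rstep R"
        "?v = replace_at u p1 (replace_at (l1 \<cdot> \<sigma>1) q1 s')" by auto
      have lin: "replace_at (l1 \<cdot> \<sigma>1) q1 s' = l1 \<cdot> \<sigma>1(x := s')"
        using linear_replace[OF Rlin[OF rl(1)] var(2,3)] .
      let ?c = "replace_at u p1 (r1 \<cdot> \<sigma>1(x := s'))"
      have vc: "(?v, ?c) \<in> rstep R" unfolding s'(2) lin
        using ps(1) rl(1) by (intro rstepI[of l1 r1 R p1 _ "\<sigma>1(x := s')"]) auto
      have tc: "(?t, ?c) \<in> (rstep R)\<^sup>*"
        using rsteps_replace[OF rsteps_subst_var[of \<sigma>1 x s' R r1, OF s'(1)] ps(1)] .
      have "(?t, ?v) \<in> join_mod B R" using joinI[OF tc sim_refl] vc by auto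
      then show ?thesis using join_CB ut uv by blast
    qed
  qed
  show ?case
  proof (intro allI impI)
    fix u p1 l1 r1 \<sigma>1 p2 l2 r2 \<sigma>2
    assume rl: "(l1, r1) \<in> R" "(l2, r2) \<in> R" and ps: "p1 \<in> poss u" "p2 \<in> poss u"
      and s1: "subt_at u p1 = l1 \<cdot> \<sigma>1" and s2: "subt_at u p2 = l2 \<cdot> \<sigma>2"
      and mn: "min (size (subt_at u p1)) (size (subt_at u p2)) = n"
    let ?t = "replace_at u p1 (r1 \<cdot> \<sigma>1)" and ?v = "replace_at u p2 (r2 \<cdot> \<sigma>2)"
    have ut: "(u, ?t) \<in> gt" using rstepR_gt rstepI[OF rl(1) ps(1) s1] by blast
    have uv: "(u, ?v) \<in> gt" using rstepR_gt rstepI[OF rl(2) ps(2) s2] by blast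
    have mn': "min (size (subt_at u p2)) (size (subt_at u p1)) = n" using mn by simp
    show "(?t, ?v) \<in> CB R u"
    proof (cases p2 p1 rule: pos_cases)
      case (post q) then show ?thesis using nested[OF rl ps s1 s2 mn] nested[OF rl(2,1) ps(2,1) s2 s1 mn'] CB_sym by blast
    next
      case (pre q) then show ?thesis using nested[OF rl ps s1 s2 mn] nested[OF rl(2,1) ps(2,1) s2 s1 mn'] CB_sym by blast
    next
      case (par r i j p q)
      obtain c where "(?t, c) \<in> rstep R" "(?v, c) \<in> rstep R"
        using par_peak[OF par ps s1 rl(1) s2 rl(2)] by blast
      then have "(?t, ?v) \<in> join_mod B R" using joinI[OF _ sim_refl] by blast
      then show ?thesis using join_CB ut uv by blast
    qed
  qed
qed

lemma alpha:
  assumes "(u, t) \<in> rstep R" "(u, v) \<in> rstep R"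
  shows "(t, v) \<in> CB R u"
proof -
  from assms(1) obtain l1 r1 p1 \<sigma>1 where 1: "(l1, r1) \<in> R" "p1 \<in> poss u" "subt_at u p1 = l1 \<cdot> \<sigma>1" "t = replace_at u p1 (r1 \<cdot> \<sigma>1)"
    by (rule rstepE)
  from assms(2) obtain l2 r2 p2 \<sigma>2 where 2: "(l2, r2) \<in> R" "p2 \<in> poss u" "subt_at u p2 = l2 \<cdot> \<sigma>2" "v = replace_at u p2 (r2 \<cdot> \<sigma>2)"
    by (rule rstepE)
  show ?thesis using alpha_aux 1 2 by blast
qed

end

lemma pos_cases': "(\<exists>q. p2 = p1 @ q) \<or> (\<exists>q. p1 = p2 @ q) \<or> (\<exists>r i j p q. i \<noteq> j \<and> p1 = r @ i # p \<and> p2 = r @ j # q)"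
  by (rule pos_cases[of p2 p1]) blast+

context peak begin

lemma beta_aux:
  "\<forall>u p1 l1 r1 \<sigma>1 p2 l2 r2 \<sigma>2. (l1, r1) \<in> R \<longrightarrow> (l2, r2) \<in> Bpm B \<longrightarrow> p1 \<in> poss u \<longrightarrow> p2 \<in> poss u \<longrightarrow>
    subt_at u p1 = l1 \<cdot> \<sigma>1 \<longrightarrow> subt_at u p2 = l2 \<cdot> \<sigma>2 \<longrightarrow> size (subt_at u p1) = n \<longrightarrow>
    (\<exists>c. (replace_at u p2 (r2 \<cdot> \<sigma>2), c) \<in> rstep R \<and> (c, replace_at u p1 (r1 \<cdot> \<sigma>1)) \<in> CB R u)"
proof (induction n rule: less_induct)
  case (less n)
  show ?case
  proof (intro allI impI)
    fix u p1 l1 r1 \<sigma>1 p2 l2 r2 \<sigma>2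
    assume rl: "(l1, r1) \<in> R" "(l2, r2) \<in> Bpm B" and ps: "p1 \<in> poss u" "p2 \<in> poss u"
      and s1: "subt_at u p1 = l1 \<cdot> \<sigma>1" and s2: "subt_at u p2 = l2 \<cdot> \<sigma>2"
      and n: "size (subt_at u p1) = n"
    let ?t = "replace_at u p1 (r1 \<cdot> \<sigma>1)" and ?v = "replace_at u p2 (r2 \<cdot> \<sigma>2)"
    let ?G = "\<exists>c. (?v, c) \<in> rstep R \<and> (c, ?t) \<in> CB R u"
    have ut1: "(u, ?t) \<in> rstep R" using rstepI[OF rl(1) ps(1) s1] by blast
    have ut: "(u, ?t) \<in> gt" using rstepR_gt ut1 by blast
    have uv: "(u, ?v) \<in> sim" using BB_sim rstepI[OF rl(2) ps(2) s2] by blast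
    have fromOk: "?G" if "OkConv R ?v ?t" using OkConv_path[OF that uv ut Rgt] .
    have fromJoin: "?G" if "(?v, c) \<in> rstep R" "(c, ?t) \<in> join_mod B R" for c
    proof -
      have "(u, c) \<in> gt" using sim_gt[OF uv rstepR_gt[OF that(1)]] .
      then show ?thesis using join_CB[OF that(2) _ ut] that(1) by blast
    qed
    have nonprime: "?G" if p3: "p3 \<in> poss u" "subt_at u p3 = l3 \<cdot> \<sigma>3" "(l3, r3) \<in> R"
      "size (subt_at u p3) < n" for p3 l3 r3 \<sigma>3
    proof -
      let ?w = "replace_at u p3 (r3 \<cdot> \<sigma>3)"
      have A: "(?t, ?w) \<in> CB R u" using alpha[OF ut1 rstepI[OF p3(3,1,2)]] by simp
      obtain c where c: "(?v, c) \<in> rstep R" "(c, ?w) \<in> CB R u"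
        using less.IH[OF p3(4)] p3 rl(2) ps(2) s2 by blast
      show ?thesis using c CB_trans[OF c(2) CB_sym[OF A]] by blast
    qed
    consider (A) q where "p2 = p1 @ q" | (B) q where "p1 = p2 @ q"
      | (P) r i j p q where "i \<noteq> j" "p1 = r @ i # p" "p2 = r @ j # q"
      using pos_cases'[of p2 p1] by blast
    then show ?G
    proof cases
      case (A q)
      have qp: "q \<in> poss (l1 \<cdot> \<sigma>1)" using ps(2) A s1 by simp
      from qp show ?thesis
      proof (cases rule: poss_subst_cases)
        case funpos
        then have qf: "q \<in> fun_poss l1" unfolding fun_poss_def by auto
        have eq: "subt_at (l1 \<cdot> \<sigma>1) q = l2 \<cdot> \<sigma>2" using s1 s2 A by simp
        show ?thesis
        proof (cases "\<forall>q' \<in> poss (l2 \<cdot> \<sigma>2). q' \<noteq> [] \<longrightarrow> NF R (subt_at (l2 \<cdot> \<sigma>2) q')")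
          case True
          from crit[OF BBvars' fair_BR rl(2) rl(1) ps(1) s1 qf eq True]
          show ?thesis using A fromOk by simp
        next
          case False
          then obtain q' where q': "q' \<in> poss (l2 \<cdot> \<sigma>2)" "q' \<noteq> []" "\<not> NF R (subt_at (l2 \<cdot> \<sigma>2) q')" by auto
          obtain p3 l3 r3 \<sigma>3 where p3: "p3 \<in> poss u" "subt_at u p3 = l3 \<cdot> \<sigma>3" "(l3, r3) \<in> R"
            "size (subt_at u p3) < size (subt_at u p2)"
            using nonprime_step[OF ps(2) s2 q'] by metis
          have "size (subt_at u p2) \<le> n" using n size_subt_at_append_le[of p1 q u] ps A by auto
          then show ?thesis using nonprime[OF p3(1-3)] p3(4) by simp
        qed
      next
        case (var q1 q2 x)
        from var_peak[of p1 q1 q2 u l1 \<sigma>1 x l2 \<sigma>2 r2 "Bpm B"] var ps A s1 s2 rl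
        obtain s' where s': "(\<sigma>1 x, s') \<in> rstep (Bpm B)"
          "?v = replace_at u p1 (replace_at (l1 \<cdot> \<sigma>1) q1 s')" by auto
        have lin: "replace_at (l1 \<cdot> \<sigma>1) q1 s' = l1 \<cdot> \<sigma>1(x := s')"
          using linear_replace[OF Rlin[OF rl(1)] var(2,3)] .
        let ?c = "replace_at u p1 (r1 \<cdot> \<sigma>1(x := s'))"
        have vc: "(?v, ?c) \<in> rstep R" unfolding s'(2) lin
          using ps(1) rl(1) by (intro rstepI[of l1 r1 R p1 _ "\<sigma>1(x := s')"]) auto
        have "(r1 \<cdot> \<sigma>1, r1 \<cdot> \<sigma>1(x := s')) \<in> sim"
          using BBs_sim[OF rsteps_subst_var[of \<sigma>1 x s' "Bpm B" r1, OF s'(1)]] .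
        then have "(?c, ?t) \<in> sim" using sim_replace[OF _ ps(1)] sim_sym by blast
        then have "(?c, ?t) \<in> join_mod B R" using joinI[of ?c ?c ?t ?t] by blast
        then show ?thesis using fromJoin vc by blast
      qed
    next
      case (B q)
      have qp: "q \<in> poss (l2 \<cdot> \<sigma>2)" using ps(1) B s2 by simp
      from qp show ?thesis
      proof (cases rule: poss_subst_cases)
        case funpos
        then have qf: "q \<in> fun_poss l2" unfolding fun_poss_def by auto
        have eq: "subt_at (l2 \<cdot> \<sigma>2) q = l1 \<cdot> \<sigma>1" using s1 s2 B by simp
        show ?thesis
        proof (cases "\<forall>q' \<in> poss (l1 \<cdot> \<sigma>1). q' \<noteq> [] \<longrightarrow> NF R (subt_at (l1 \<cdot> \<sigma>1) q')")
          case True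
          from crit[OF Rvars fair_RB rl(1) rl(2) ps(2) s2 qf eq True]
          show ?thesis using B fromOk OkConv_sym by simp
        next
          case False
          then obtain q' where q': "q' \<in> poss (l1 \<cdot> \<sigma>1)" "q' \<noteq> []" "\<not> NF R (subt_at (l1 \<cdot> \<sigma>1) q')" by auto
          obtain p3 l3 r3 \<sigma>3 where p3: "p3 \<in> poss u" "subt_at u p3 = l3 \<cdot> \<sigma>3" "(l3, r3) \<in> R"
            "size (subt_at u p3) < size (subt_at u p1)"
            using nonprime_step[OF ps(1) s1 q'] by metis
          then show ?thesis using nonprime[OF p3(1-3)] n by simp
        qed
      next
        case (var q1 q2 x)
        from var_peak[of p2 q1 q2 u l2 \<sigma>2 x l1 \<sigma>1 r1 R] var ps B s1 s2 rl
        obtain s' where s': "(\<sigma>2 x, s') \<in> rstep R"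
          "?t = replace_at u p2 (replace_at (l2 \<cdot> \<sigma>2) q1 s')" by auto
        let ?a = "replace_at u p2 (l2 \<cdot> \<sigma>2(x := s'))"
        let ?b = "replace_at u p2 (r2 \<cdot> \<sigma>2(x := s'))"
        have ta: "(?t, ?a) \<in> (rstep R)\<^sup>*"
          unfolding s'(2) using rsteps_replace[OF nonlinear_replace[where \<sigma>=\<sigma>2, OF var(2,3) s'(1)] ps(2)] .
        have ab: "(?a, ?b) \<in> sim"
          using sim_replace[OF BB_sim[OF rstep_rule[OF rl(2)]] ps(2)] .
        have xr: "x \<in> vars_term r2" using pos_var[OF var(2,3)] BBvars[OF rl(2)] by simp
        have ne: "\<sigma>2 x \<noteq> s'" using rstepR_gt[OF s'(1)] gt_irrefl by auto
        have "(r2 \<cdot> \<sigma>2, r2 \<cdot> \<sigma>2(x := s')) \<in> (rstep R)\<^sup>+"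
          using rsteps_subst_var_plus[where \<sigma>=\<sigma>2, OF s'(1) xr ne] .
        then obtain c0 where c0: "(r2 \<cdot> \<sigma>2, c0) \<in> rstep R" "(c0, r2 \<cdot> \<sigma>2(x := s')) \<in> (rstep R)\<^sup>*"
          by (meson tranclD)
        let ?c = "replace_at u p2 c0"
        have vc: "(?v, ?c) \<in> rstep R" using rstep_replace[OF c0(1) ps(2)] .
        have cb: "(?c, ?b) \<in> (rstep R)\<^sup>*" using rsteps_replace[OF c0(2) ps(2)] .
        have "(?c, ?t) \<in> join_mod B R" using joinI[OF cb sim_sym[OF ab] ta] .
        then show ?thesis using fromJoin vc by blast
      qed
    next
      case (P r i j p q)
      obtain c where c: "(?t, c) \<in> rstep (Bpm B)" "(?v, c) \<in> rstep R"
        using par_peak[OF P ps s1 rl(1) s2 rl(2)] by blast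
      have "(c, ?t) \<in> sim" using BB_sim[OF c(1)] sim_sym by blast
      then have "(c, ?t) \<in> join_mod B R" using joinI[of c c ?t ?t] by blast
      then show ?thesis using fromJoin c(2) by blast
    qed
  qed
qed

lemma beta:
  assumes "(u, t) \<in> rstep R" "(u, v) \<in> sym_step B"
  shows "\<exists>c. (v, c) \<in> rstep R \<and> (c, t) \<in> CB R u"
proof -
  from assms(1) obtain l1 r1 p1 \<sigma>1 where 1: "(l1, r1) \<in> R" "p1 \<in> poss u" "subt_at u p1 = l1 \<cdot> \<sigma>1" "t = replace_at u p1 (r1 \<cdot> \<sigma>1)"
    by (rule rstepE)
  from assms(2) obtain l2 r2 p2 \<sigma>2 where 2: "(l2, r2) \<in> Bpm B" "p2 \<in> poss u" "subt_at u p2 = l2 \<cdot> \<sigma>2" "v = replace_at u p2 (r2 \<cdot> \<sigma>2)"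
    unfolding sym_step_Bpm by (rule rstepE)
  show ?thesis using beta_aux 1 2 by blast
qed

end

context peak begin

lemma nf_exists: "\<exists>n. (y, n) \<in> (rstep R)\<^sup>* \<and> NF R n"
proof (induction y rule: wf_induct[OF gt_wf])
  case (1 y)
  show ?case
  proof (cases "NF R y")
    case True then show ?thesis by auto
  next
    case False
    then obtain z where z: "(y, z) \<in> rstep R" unfolding NF_def by auto
    then have "(z, y) \<in> gt\<inverse>" using rstepR_gt by auto
    with 1 obtain n where "(z, n) \<in> (rstep R)\<^sup>*" "NF R n" by blast
    then show ?thesis using z by (meson converse_rtrancl_into_rtrancl)
  qed
qed

lemma Below_sim: "(u, y) \<in> sim \<Longrightarrow> Below y = Below u"
  unfolding Below_def using sim_gt sim_sym by blast

lemma CB_sim: "(u, y) \<in> sim \<Longrightarrow> CB R y = CB R u"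
  unfolding CB_def using Below_sim by simp

definition UNq where
  "UNq u \<longleftrightarrow> (\<forall>y1 y2 n1 n2. (u, y1) \<in> sim \<longrightarrow> (u, y2) \<in> sim \<longrightarrow> (y1, n1) \<in> (rstep R)\<^sup>* \<longrightarrow> NF R n1 \<longrightarrow>
     (y2, n2) \<in> (rstep R)\<^sup>* \<longrightarrow> NF R n2 \<longrightarrow> (n1, n2) \<in> sim)"

lemma UNq_D: "UNq u \<Longrightarrow> (u, y1) \<in> sim \<Longrightarrow> (u, y2) \<in> sim \<Longrightarrow> (y1, n1) \<in> (rstep R)\<^sup>* \<Longrightarrow> NF R n1 \<Longrightarrow>
     (y2, n2) \<in> (rstep R)\<^sup>* \<Longrightarrow> NF R n2 \<Longrightarrow> (n1, n2) \<in> sim"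
  unfolding UNq_def by blast

lemma step_nf:
  assumes "(y, z) \<in> sym_step (R \<union> B)" "UNq y" "UNq z"
    "(y, ny) \<in> (rstep R)\<^sup>*" "NF R ny" "(z, nz) \<in> (rstep R)\<^sup>*" "NF R nz"
  shows "(ny, nz) \<in> sim"
proof -
  have "(y, z) \<in> rstep R \<or> (z, y) \<in> rstep R \<or> (y, z) \<in> sim"
    using assms(1) unfolding sym_step_def rstep_union simB_def conv_def by auto
  then show ?thesis
  proof (elim disjE)
    assume "(y, z) \<in> rstep R"
    then have "(y, nz) \<in> (rstep R)\<^sup>*" using assms(6) by (meson converse_rtrancl_into_rtrancl)
    then show ?thesis using UNq_D[OF assms(2) sim_refl sim_refl assms(4,5) _ assms(7)] by blast
  next
    assume "(z, y) \<in> rstep R"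
    then have "(z, ny) \<in> (rstep R)\<^sup>*" using assms(4) by (meson converse_rtrancl_into_rtrancl)
    then show ?thesis using UNq_D[OF assms(3) sim_refl sim_refl _ assms(5) assms(6,7)] by blast
  next
    assume "(y, z) \<in> sim"
    then show ?thesis using UNq_D[OF assms(2) sim_refl _ assms(4,5,6,7)] by blast
  qed
qed

lemma below_nf:
  assumes UNb: "\<forall>w \<in> Below u. UNq w"
    and ab: "(a, b) \<in> CB R u" and aB: "a \<in> Below u"
    and na: "(a, na) \<in> (rstep R)\<^sup>*" "NF R na"
  shows "(b, nb) \<in> (rstep R)\<^sup>* \<Longrightarrow> NF R nb \<Longrightarrow> (na, nb) \<in> sim"
  using ab unfolding CB_def
proof (induction arbitrary: nb rule: rtrancl_induct)
  case base
  then show ?case using UNq_D[OF _ sim_refl sim_refl na] UNb aB by blast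
next
  case (step y z)
  have yz: "(y, z) \<in> sym_step (R \<union> B)" "y \<in> Below u" "z \<in> Below u" using step(2) unfolding rel_on_def by auto
  obtain ny where ny: "(y, ny) \<in> (rstep R)\<^sup>*" "NF R ny" using nf_exists by blast
  have "(na, ny) \<in> sim" using step(3)[OF ny] .
  moreover have "(ny, nb) \<in> sim" using step_nf[OF yz(1) _ _ ny step(4,5)] UNb yz by blast
  ultimately show ?case using sim_trans by blast
qed

lemma chain:
  assumes "(y, y') \<in> (sym_step B)\<^sup>*" "(y, z) \<in> rstep R"
  shows "\<exists>z'. (y', z') \<in> rstep R \<and> (z, z') \<in> CB R y"
  using assms(1)
proof (induction rule: rtrancl_induct)
  case base then show ?case using assms(2) unfolding CB_def by auto
next
  case (step w w')
  obtain zw where zw: "(w, zw) \<in> rstep R" "(z, zw) \<in> CB R y" using step(3) by blast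
  obtain c where c: "(w', c) \<in> rstep R" "(c, zw) \<in> CB R w" using beta[OF zw(1) step(2)] by blast
  have "(y, w) \<in> sim" using step(1) unfolding simB_def conv_def .
  then have "CB R w = CB R y" using CB_sim by blast
  then show ?case using c zw CB_trans CB_sym by blast
qed

lemma NF_rsteps: "NF R y \<Longrightarrow> (y, n) \<in> (rstep R)\<^sup>* \<Longrightarrow> n = y"
  unfolding NF_def by (metis converse_rtranclE)

lemma UNq_all: "UNq u"
proof (induction u rule: wf_induct[OF gt_wf])
  case (1 u)
  then have UNb: "\<forall>w \<in> Below u. UNq w" unfolding Below_def by blast
  show ?case unfolding UNq_def
  proof (intro allI impI)
    fix y1 y2 n1 n2
    assume y1: "(u, y1) \<in> sim" and y2: "(u, y2) \<in> sim" and n1: "(y1, n1) \<in> (rstep R)\<^sup>*" "NF R n1"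
      and n2: "(y2, n2) \<in> (rstep R)\<^sup>*" "NF R n2"
    have y12: "(y1, y2) \<in> sim" using y1 y2 sim_sym sim_trans by blast
    have red_trans: "\<not> NF R b" if ab: "(a, b) \<in> sim" and na: "\<not> NF R a" for a b
    proof -
      obtain z where "(a, z) \<in> rstep R" using na unfolding NF_def by auto
      with chain[of a b z] ab show ?thesis unfolding NF_def simB_def conv_def by blast
    qed
    show "(n1, n2) \<in> sim"
    proof (cases "NF R y1")
      case True
      then have "NF R y2" using red_trans[OF sim_sym[OF y12]] by blast
      then show ?thesis using NF_rsteps True n1 n2 y12 by metis
    next
      case False
      then have F2: "\<not> NF R y2" using red_trans[OF y12] by blast
      have ne1: "y1 \<noteq> n1" using False n1 by auto
      have ne2: "y2 \<noteq> n2" using F2 n2 by auto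
      obtain z1 where z1: "(y1, z1) \<in> rstep R" "(z1, n1) \<in> (rstep R)\<^sup>*"
        using n1(1) ne1 by (metis converse_rtranclE)
      obtain z2 where z2: "(y2, z2) \<in> rstep R" "(z2, n2) \<in> (rstep R)\<^sup>*"
        using n2(1) ne2 by (metis converse_rtranclE)
      obtain z' where z': "(y2, z') \<in> rstep R" "(z1, z') \<in> CB R y1"
        using chain[OF _ z1(1), of y2] y12 unfolding simB_def conv_def by blast
      have "(z', z2) \<in> CB R y2" using alpha[OF z'(1) z2(1)] .
      moreover have "CB R y1 = CB R u" "CB R y2 = CB R u" using CB_sim y1 y2 by auto
      ultimately have "(z1, z2) \<in> CB R u" using z' CB_trans by auto
      moreover have "z1 \<in> Below u" using sim_gt[OF y1 rstepR_gt[OF z1(1)]] unfolding Below_def by simp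
      ultimately show ?thesis using below_nf[OF UNb _ _ z1(2) n1(2) z2(2) n2(2)] by blast
    qed
  qed
qed

lemma CR: "CR_mod B R"
  unfolding CR_mod_def
proof
  fix x assume "x \<in> conv (R \<union> B)"
  then obtain s t where x: "x = (s, t)" and st: "(s, t) \<in> (sym_step (R \<union> B))\<^sup>*"
    unfolding conv_def by (cases x) auto
  obtain ns where ns: "(s, ns) \<in> (rstep R)\<^sup>*" "NF R ns" using nf_exists by blast
  have "\<And>nt. (t, nt) \<in> (rstep R)\<^sup>* \<Longrightarrow> NF R nt \<Longrightarrow> (ns, nt) \<in> sim"
    using st
  proof (induction rule: rtrancl_induct)
    case base then show ?case using UNq_D[OF UNq_all sim_refl sim_refl ns] by blast
  next
    case (step y z)
    obtain ny where ny: "(y, ny) \<in> (rstep R)\<^sup>*" "NF R ny" using nf_exists by blast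
    show ?case using sim_trans[OF step(3)[OF ny] step_nf[OF step(2) UNq_all UNq_all ny step(4,5)]] .
  qed
  moreover obtain nt where nt: "(t, nt) \<in> (rstep R)\<^sup>*" "NF R nt" using nf_exists by blast
  ultimately have "(ns, nt) \<in> sim" by blast
  then show "x \<in> join_mod B R" unfolding x using joinI[OF ns(1) _ nt(1)] by blast
qed

end

context cmod begin

lemma forward_inv:
  assumes run: "IB_run gt B E run n"
  shows "i \<le> n \<Longrightarrow> snd (run i) \<subseteq> gt \<and> fst (run i) \<union> snd (run i) \<subseteq> conv (E \<union> B)"
proof (induction i)
  case 0
  have "run 0 = (E, {})" using run unfolding IB_run_def by auto
  then show ?case using sub_conv[of "E \<union> B"] by auto
next
  case (Suc k)
  let ?C = "conv (E \<union> B)"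
  have IH: "snd (run k) \<subseteq> gt" "fst (run k) \<union> snd (run k) \<subseteq> ?C" using Suc by auto
  have st: "IB_step gt B (run k) (run (Suc k))" using run Suc.prems unfolding IB_run_def by auto
  have BC: "Bpm B \<subseteq> ?C" using sub_conv[of "E \<union> B"] conv_sym unfolding Bpm_def by blast
  have rC: "rstep X \<subseteq> ?C" if "X \<subseteq> ?C" for X using rstep_sub_conv[OF that] .
  have symC: "(a, b) \<in> ?C \<Longrightarrow> (b, a) \<in> ?C" for a b by (rule conv_sym)
  have trC: "(a, b) \<in> ?C \<Longrightarrow> (b, c) \<in> ?C \<Longrightarrow> (a, c) \<in> ?C" for a b c by (rule conv_trans)
  from st show ?case
  proof cases
    case (deduce u s R t E')
    have "(u, s) \<in> ?C" using rC[of R] IH deduce by auto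
    moreover have "(u, t) \<in> ?C" using rC[of "R \<union> Bpm B"] IH deduce BC by auto
    ultimately have "(s, t) \<in> ?C" using symC trC by blast
    then show ?thesis using IH deduce by auto
  next
    case (orient_l s t E' R) then show ?thesis using IH by auto
  next
    case (orient_r t s E' R) then show ?thesis using IH by (auto intro: symC)
  next
    case (delete s t E' R) then show ?thesis using IH by auto
  next
    case (simplify_l s t E' u R)
    have "(s, u) \<in> ?C" using rC[of R] IH simplify_l by auto
    moreover have "(s, t) \<in> ?C" using IH simplify_l by auto
    ultimately have "(u, t) \<in> ?C" using symC trC by blast
    then show ?thesis using IH simplify_l by auto
  next
    case (simplify_r t s E' u R)
    have "(s, u) \<in> ?C" using rC[of R] IH simplify_r by auto
    moreover have "(t, s) \<in> ?C" using IH simplify_r by auto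
    ultimately have "(u, t) \<in> ?C" using symC trC by blast
    then show ?thesis using IH simplify_r by auto
  next
    case (collapse s t R u E')
    have "(s, u) \<in> ?C" using rC[of "R - {(s, t)}"] IH collapse by auto
    moreover have "(s, t) \<in> ?C" using IH collapse by auto
    ultimately have "(u, t) \<in> ?C" using symC trC by blast
    then show ?thesis using IH collapse by auto
  next
    case (compose s t R u E')
    have "(t, u) \<in> ?C" using rC[of "R - {(s, t)}"] IH compose by auto
    moreover have "(s, t) \<in> ?C" using IH compose by auto
    ultimately have "(s, u) \<in> ?C" using trC by blast
    moreover have "(s, u) \<in> gt"
      using gt_trans[of s t u] rstep_gt[of "R - {(s, t)}" t u] IH compose by auto
    ultimately show ?thesis using IH compose by auto
  qed
qed

lemma backward_inv:
  assumes run: "IB_run gt B E run n" and final: "run n = ({}, R)"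
  shows "i \<le> n \<Longrightarrow> \<forall>(s, t) \<in> fst (run i) \<union> snd (run i). OkConv R s t"
proof (induction i rule: inc_induct)
  case base
  have Rgt: "R \<subseteq> gt" using forward_inv[OF run, of n] final by auto
  show ?case
  proof (intro ballI, clarify)
    fix s t assume "(s, t) \<in> fst (run n) \<union> snd (run n)"
    then have "(s, t) \<in> R" using final by auto
    from OkConv_step[OF Rgt rstep_rule[OF this, of Var] OkConv_refl] show "OkConv R s t" by simp
  qed
next
  case (step k)
  have IH: "\<forall>(s, t) \<in> fst (run (Suc k)) \<union> snd (run (Suc k)). OkConv R s t" using step.IH .
  have st: "IB_step gt B (run k) (run (Suc k))" using run step.hyps unfolding IB_run_def by auto
  have gtk: "snd (run k) \<subseteq> gt" using forward_inv[OF run, of k] step.hyps by auto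
  from st show ?case
  proof cases
    case (deduce u s R' t E') then show ?thesis using IH by auto
  next
    case (orient_l s t E' R') then show ?thesis using IH by auto
  next
    case (orient_r t s E' R')
    then have "OkConv R s t" using IH by auto
    then show ?thesis using IH orient_r OkConv_sym by auto
  next
    case (delete s t E' R')
    then show ?thesis using IH OkConv_sim by auto
  next
    case (simplify_l s t E' u R')
    have rules: "\<forall>(l, r) \<in> R'. OkConv R l r" using IH simplify_l by auto
    have "OkConv R s u" using OkConv_rstep[OF rules] simplify_l by auto
    moreover have "OkConv R u t" using IH simplify_l by auto
    moreover have "(s, u) \<in> gt" using rstep_gt gtk simplify_l by auto
    ultimately have "OkConv R s t" using OkConv_trans by blast
    then show ?thesis using IH simplify_l by auto
  next
    case (simplify_r t s E' u R')
    have rules: "\<forall>(l, r) \<in> R'. OkConv R l r" using IH simplify_r by auto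
    have "OkConv R s u" using OkConv_rstep[OF rules] simplify_r by auto
    moreover have "OkConv R u t" using IH simplify_r by auto
    moreover have "(s, u) \<in> gt" using rstep_gt gtk simplify_r by auto
    ultimately have "OkConv R t s" using OkConv_trans OkConv_sym by blast
    then show ?thesis using IH simplify_r by auto
  next
    case (collapse s t R' u E')
    have rules: "\<forall>(l, r) \<in> R' - {(s, t)}. OkConv R l r" using IH collapse by auto
    have "OkConv R s u" using OkConv_rstep[OF rules] collapse by auto
    moreover have "OkConv R u t" using IH collapse by auto
    moreover have "(s, u) \<in> gt" using rstep_gt[of "R' - {(s, t)}" s u] gtk collapse by auto
    ultimately have "OkConv R s t" using OkConv_trans by blast
    then show ?thesis using IH collapse by auto
  next
    case (compose s t R' u E')
    have rules: "\<forall>(l, r) \<in> R' - {(s, t)}. OkConv R l r" using IH compose by auto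
    have "OkConv R t u" using OkConv_rstep[OF rules] compose by auto
    moreover have "OkConv R s u" using IH compose by auto
    moreover have "(t, u) \<in> gt" using rstep_gt[of "R' - {(s, t)}" t u] gtk compose by auto
    ultimately have "OkConv R s t" using OkConv_trans OkConv_sym by blast
    then show ?thesis using IH compose by auto
  qed
qed

end

theorem corollary5p7:
  fixes gt B E R :: "('f, 'v) trs"
    and run :: "nat \<Rightarrow> ('f, 'v) trs \<times> ('f, 'v) trs"
    and n :: nat
  assumes vars_inf: "infinite (UNIV :: 'v set)"
    and B_vars: "\<forall>(l, r) \<in> B. vars_term l = vars_term r"
    and order: "B_compatible_reduction_order B gt"
    and run: "IB_run gt B E run n"
    and final: "run n = ({}, R)"
    and fair: "fair_run B run n"
  shows "conv (E \<union> B) = conv (R \<union> B) \<and> SN_mod B R \<and> CR_mod B R"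
proof -
  interpret cmod gt B using order by unfold_locales
  have fw: "R \<subseteq> gt" "R \<subseteq> conv (E \<union> B)" using forward_inv[OF run, of n] final by auto
  have bw: "\<And>i. i \<le> n \<Longrightarrow> \<forall>(s, t) \<in> fst (run i). OkConv R s t"
    using backward_inv[OF run final] by blast
  have E0: "run 0 = (E, {})" using run unfolding IB_run_def by auto
  have conveq: "conv (E \<union> B) = conv (R \<union> B)"
  proof
    have "E \<subseteq> conv (R \<union> B)" using bw[of 0] E0 OkConv_conv by auto
    moreover have "B \<subseteq> conv (R \<union> B)" using sub_conv[of "R \<union> B"] by auto
    ultimately show "conv (E \<union> B) \<subseteq> conv (R \<union> B)" by (intro conv_sub_conv) auto
  next
    have "B \<subseteq> conv (E \<union> B)" using sub_conv[of "E \<union> B"] by auto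
    then show "conv (R \<union> B) \<subseteq> conv (E \<union> B)" using fw(2) by (intro conv_sub_conv) auto
  qed
  have SN: "SN_mod B R"
  proof -
    have "relstep B R \<subseteq> gt"
      unfolding relstep_def using compat rstep_gt[OF fw(1)] by blast
    then show ?thesis unfolding SN_mod_def using gt_wf
      unfolding wf_iff_no_infinite_down_chain by blast
  qed
  have ll: "left_linear R" using fair final unfolding fair_run_def by auto
  have fairCP: "\<forall>(c1, c2) \<in> PCP R \<union> PCP_pm R (Bpm B). OkConv R c1 c2"
  proof (intro ballI, clarify)
    fix c1 c2 assume c: "(c1, c2) \<in> PCP R \<union> PCP_pm R (Bpm B)"
    then have "(c1, c2) \<in> join_mod B R \<union> (\<Union>i \<in> {0..n}. sym_step (fst (run i)))"
      using fair final unfolding fair_run_def by auto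
    then show "OkConv R c1 c2"
    proof
      assume "(c1, c2) \<in> join_mod B R" then show ?thesis using OkConv_join[OF fw(1)] by blast
    next
      assume "(c1, c2) \<in> (\<Union>i \<in> {0..n}. sym_step (fst (run i)))"
      then obtain i where "i \<le> n" "(c1, c2) \<in> sym_step (fst (run i))" by auto
      then show ?thesis using OkConv_sym_step bw by blast
    qed
  qed
  interpret peak gt B R using vars_inf B_vars fw(1) ll fairCP by unfold_locales auto
  show ?thesis using conveq SN CR by blast
qed

end
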